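(* Consider the POMCP++ simulation process described in the context with $0<\epsilon_a<1$ and $\epsilon_z<0$, run for infinitely many simulation episodes (so the root is visited infinitely often). Then with probability $1$, every node that is ever created in the search tree is visited infinitely often.
   Context: POMCP++ builds a search tree whose nodes alternate between belief nodes (the root, or histories $h=(\bm a_0,\bm z_0,\dots,\bm z_t)$ ending with a measurement) and belief-action nodes (histories $h\bm a$ ending with an action). The action set $\mathcal A_m$ is finite. The process runs an infinite sequence of simulation episodes; each episode starts at the root and descends. At an already expanded belief node $h$ (a "visit" of $h$), an action is selected by the $\epsilon$-greedy rule: with probability $1-\epsilon_a$ the action maximizing the current value estimate $V(h\bm a)$ is chosen, and with probability $\epsilon_a$ an action is chosen uniformly at random from $\mathcal A_m$, the randomization being drawn freshly and independently of the past at each visit; the episode then visits $h\bm a$. At a belief-action node $h\bm a$ having $c$ existing child belief nodes, with probability $(c+1)^{\epsilon_z}$ (where $\epsilon_z<0$ is a parameter) a new measurement is sampled from a continuous distribution and a new child belief node $h\bm a\bm z$ is created (almost surely distinct from existing children), after which the descent stops (a rollout is performed); otherwise one of the $c$ existing children is chosen uniformly at random and the descent continues into it (a visit of that child). A newly reached unexpanded belief node is expanded (its belief-action children are created) and the descent stops. Descent also stops at depths $d$ with $\gamma^d<\epsilon$ for fixed $\gamma\in(0,1)$, $\epsilon>0$. *)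

theory Defs
  imports "HOL-Probability.Probability"
begin

text \<open>
Actions are labelled 0,...,m-1.  A belief node is identified with its history, a list of
pairs (action, index of measurement child): because new measurements are drawn from a
continuous distribution they are almost surely distinct, so the k-th created child of a
belief-action node h a is named by the index k.
\<close>

type_synonym bnode = "(nat \<times> nat) list"

datatype node = B bnode | BA bnode nat

record tree =
  created :: "bnode set"
  expanded :: "bnode set"       \<comment> \<open>belief nodes whose belief-action children were created\<close>
  nch :: "bnode \<Rightarrow> nat \<Rightarrow> nat"  \<comment> \<open>number of child belief nodes of the node h a\<close>

definition init_tree :: tree where
  "init_tree = \<lparr>created = {[]}, expanded = {}, nch = (\<lambda>_ _. 0)\<rparr>"

text \<open>Randomness of one episode: u k j (j = 0..3) is the j-th fresh uniform [0,1] draw used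
at depth k.  g is the greedy choice (argmax of the current value estimates) in this episode.
The descent returns the new tree and the set of nodes visited in this episode.
The first argument is fuel (never exhausted when started with cutoff_depth + 1).\<close>

fun descend ::
  "nat \<Rightarrow> real \<Rightarrow> real \<Rightarrow> real \<Rightarrow> real \<Rightarrow> nat \<Rightarrow> (bnode \<Rightarrow> nat) \<Rightarrow> (nat \<Rightarrow> nat \<Rightarrow> real)
   \<Rightarrow> tree \<Rightarrow> bnode \<Rightarrow> nat \<Rightarrow> tree \<times> node set" where
  "descend m ea ez \<gamma> \<epsilon> 0 g u T h k = (T, {B h})"
| "descend m ea ez \<gamma> \<epsilon> (Suc f) g u T h k =
    (if \<gamma> ^ k < \<epsilon> then (T, {B h})
     else if h \<notin> expanded T then (T\<lparr>expanded := insert h (expanded T)\<rparr>, {B h})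
     else
       (let a = (if u k 0 < ea then min (m - 1) (nat \<lfloor>u k 1 * real m\<rfloor>) else g h);
            c = nch T h a
        in if c = 0 \<or> u k 2 < (real c + 1) powr ez
           then (T\<lparr>created := insert (h @ [(a, c)]) (created T),
                   nch := (nch T)(h := (nch T h)(a := Suc c))\<rparr>, {B h, BA h a})
           else
             (let i = min (c - 1) (nat \<lfloor>u k 3 * real c\<rfloor>);
                  r = descend m ea ez \<gamma> \<epsilon> f g u T (h @ [(a, i)]) (Suc k)
              in (fst r, snd r \<union> {B h, BA h a}))))"

definition cutoff_depth :: "real \<Rightarrow> real \<Rightarrow> nat" where
  "cutoff_depth \<gamma> \<epsilon> = (LEAST d. \<gamma> ^ d < \<epsilon>)"

text \<open>The random source: i.i.d. uniform [0,1] variables indexed by (episode, depth, slot).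
Slots 0..3 are used by the descent; the remaining slots are free (e.g. for rollouts, on which
the value estimates, hence the greedy choice, may depend).\<close>

type_synonym rsrc = "nat \<times> nat \<times> nat \<Rightarrow> real"

definition Omega :: "rsrc measure" where
  "Omega = PiM UNIV (\<lambda>_. uniform_measure lborel {0..1::real})"

fun pomcp_tree ::
  "nat \<Rightarrow> real \<Rightarrow> real \<Rightarrow> real \<Rightarrow> real \<Rightarrow> (nat \<Rightarrow> bnode \<Rightarrow> rsrc \<Rightarrow> nat) \<Rightarrow> rsrc \<Rightarrow> nat \<Rightarrow> tree" where
  "pomcp_tree m ea ez \<gamma> \<epsilon> G \<omega> 0 = init_tree"
| "pomcp_tree m ea ez \<gamma> \<epsilon> G \<omega> (Suc n) =
     fst (descend m ea ez \<gamma> \<epsilon> (Suc (cutoff_depth \<gamma> \<epsilon>)) (\<lambda>h. G n h \<omega>) (\<lambda>k j. \<omega> (n, k, j))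
            (pomcp_tree m ea ez \<gamma> \<epsilon> G \<omega> n) [] 0)"

text \<open>Nodes visited in episode n (episodes numbered from 0).\<close>
definition pomcp_visited ::
  "nat \<Rightarrow> real \<Rightarrow> real \<Rightarrow> real \<Rightarrow> real \<Rightarrow> (nat \<Rightarrow> bnode \<Rightarrow> rsrc \<Rightarrow> nat) \<Rightarrow> rsrc \<Rightarrow> nat \<Rightarrow> node set" where
  "pomcp_visited m ea ez \<gamma> \<epsilon> G \<omega> n =
     snd (descend m ea ez \<gamma> \<epsilon> (Suc (cutoff_depth \<gamma> \<epsilon>)) (\<lambda>h. G n h \<omega>) (\<lambda>k j. \<omega> (n, k, j))
            (pomcp_tree m ea ez \<gamma> \<epsilon> G \<omega> n) [] 0)"

definition tree_nodes :: "nat \<Rightarrow> tree \<Rightarrow> node set" where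
  "tree_nodes m T = B ` created T \<union> {BA h a | h a. h \<in> expanded T \<and> a < m}"

end

theory Submission
  imports Defs
begin



abbreviation U :: "real measure" where "U \<equiv> uniform_measure lborel {0..1::real}"

abbreviation PU :: "rsrc measure" where "PU \<equiv> PiM UNIV (\<lambda>_. U)"

lemma prob_U: "prob_space U"
  by (intro prob_space_uniform_measure) auto

lemma space_Omega[simp]: "space Omega = UNIV"
  by (simp add: Omega_def space_PiM)

lemma prob_Omega: "prob_space Omega"
  unfolding Omega_def by (intro prob_space_PiM prob_U)

lemma sets_Omega_cong [measurable_cong]: "sets Omega = sets (PiM UNIV (\<lambda>_. U))"
  by (simp add: Omega_def)

lemma coord_meas[measurable]: "(\<lambda>\<omega>. \<omega> i) \<in> borel_measurable Omega"
proof -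
  have "(\<lambda>\<omega>. \<omega> i) \<in> measurable (PiM UNIV (\<lambda>_. U)) U"
    by (rule measurable_component_singleton) simp
  moreover have "sets U = sets borel" by simp
  ultimately show ?thesis unfolding Omega_def
    using measurable_cong_sets[OF refl, of U borel] by simp
qed

definition mrg :: "nat \<Rightarrow> nat \<Rightarrow> rsrc \<Rightarrow> rsrc \<Rightarrow> rsrc" where
  "mrg k N x y = (\<lambda>i. if fst i = N \<and> fst (snd i) = k then y i else x i)"

lemma mrg_meas: "(\<lambda>p. mrg k N (fst p) (snd p)) \<in> measurable (Omega \<Otimes>\<^sub>M Omega) Omega"
proof -
  have "(\<lambda>p. mrg k N (fst p) (snd p)) \<in> measurable (Omega \<Otimes>\<^sub>M Omega) PU"
  proof (rule measurable_PiM_single')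
    fix i :: "nat \<times> nat \<times> nat"
    have "(\<lambda>p. (fst p :: rsrc) i) \<in> measurable (Omega \<Otimes>\<^sub>M Omega) U"
      using coord_meas[of i] by (simp add: measurable_cong_sets[OF refl, of U borel])
    moreover have "(\<lambda>p. (snd p :: rsrc) i) \<in> measurable (Omega \<Otimes>\<^sub>M Omega) U"
      using coord_meas[of i] by (simp add: measurable_cong_sets[OF refl, of U borel])
    ultimately show "(\<lambda>p. mrg k N (fst p) (snd p) i) \<in> measurable (Omega \<Otimes>\<^sub>M Omega) U"
      by (cases "fst i = N \<and> fst (snd i) = k") (simp_all add: mrg_def)
  qed (simp add: space_PiM)
  then show ?thesis by (simp only: Omega_def)
qed

lemma prod_emb_Omega: "f \<in> prod_emb UNIV (\<lambda>_. U) J (Pi\<^sub>E J A) \<longleftrightarrow> (\<forall>i\<in>J. f i \<in> A i)"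
  by (auto simp: prod_emb_def PiE_iff)

lemma resample: "distr (Omega \<Otimes>\<^sub>M Omega) Omega (\<lambda>p. mrg k N (fst p) (snd p)) = Omega"
proof -
  interpret O: prob_space Omega by (rule prob_Omega)
  define D where "D = {i :: nat \<times> nat \<times> nat. fst i = N \<and> fst (snd i) = k}"
  have "PU = distr (Omega \<Otimes>\<^sub>M Omega) PU (\<lambda>p. mrg k N (fst p) (snd p))"
  proof (rule measure_eqI_PiM_infinite)
    show "sets PU = sets PU" by (rule refl)
    show "sets (distr (Omega \<Otimes>\<^sub>M Omega) PU (\<lambda>p. mrg k N (fst p) (snd p))) = sets PU" by simp
    show "finite_measure (PU)" using O.finite_measure_axioms by (simp add: Omega_def)
    fix J :: "(nat \<times> nat \<times> nat) set" and A
    assume J: "finite J" "J \<subseteq> UNIV" and A: "\<And>i. i \<in> J \<Longrightarrow> A i \<in> sets U"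
    let ?X = "prod_emb UNIV (\<lambda>_. U) J (Pi\<^sub>E J A)"
    let ?X1 = "prod_emb UNIV (\<lambda>_. U) (J - D) (Pi\<^sub>E (J - D) A)"
    let ?X2 = "prod_emb UNIV (\<lambda>_. U) (J \<inter> D) (Pi\<^sub>E (J \<inter> D) A)"
    have XS: "?X \<in> sets (PU)" using J A by (intro sets_PiM_I) auto
    have X1S: "?X1 \<in> sets Omega" using J A unfolding Omega_def by (intro sets_PiM_I) auto
    have X2S: "?X2 \<in> sets Omega" using J A unfolding Omega_def by (intro sets_PiM_I) auto
    have pre: "(\<lambda>p. mrg k N (fst p) (snd p)) -` ?X \<inter> space (Omega \<Otimes>\<^sub>M Omega) = ?X1 \<times> ?X2"
    proof (rule set_eqI)
      fix p :: "rsrc \<times> rsrc"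
      obtain x y where p: "p = (x,y)" by (cases p)
      have m3: "\<And>i. mrg k N x y i = (if i \<in> D then y i else x i)"
        by (auto simp: mrg_def D_def)
      have "p \<in> (\<lambda>p. mrg k N (fst p) (snd p)) -` ?X \<inter> space (Omega \<Otimes>\<^sub>M Omega) \<longleftrightarrow> (\<forall>i\<in>J. mrg k N x y i \<in> A i)"
        by (simp add: p prod_emb_Omega space_pair_measure)
      also have "\<dots> \<longleftrightarrow> (\<forall>i\<in>J - D. x i \<in> A i) \<and> (\<forall>i\<in>J \<inter> D. y i \<in> A i)"
        unfolding m3 by auto
      also have "\<dots> \<longleftrightarrow> p \<in> ?X1 \<times> ?X2" by (simp add: p prod_emb_Omega)
      finally show "p \<in> (\<lambda>p. mrg k N (fst p) (snd p)) -` ?X \<inter> space (Omega \<Otimes>\<^sub>M Omega) \<longleftrightarrow> p \<in> ?X1 \<times> ?X2" .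
    qed
    have "emeasure (PU) ?X = (\<Prod>i\<in>J. emeasure U (A i))"
      using J A by (intro emeasure_PiM_emb prob_U) auto
    also have "\<dots> = (\<Prod>i\<in>J - D. emeasure U (A i)) * (\<Prod>i\<in>J \<inter> D. emeasure U (A i))"
    proof -
      have "J = (J - D) \<union> (J \<inter> D)" by auto
      then have "(\<Prod>i\<in>J. emeasure U (A i)) = (\<Prod>i\<in>(J - D) \<union> (J \<inter> D). emeasure U (A i))" by simp
      also have "\<dots> = (\<Prod>i\<in>J - D. emeasure U (A i)) * (\<Prod>i\<in>J \<inter> D. emeasure U (A i))"
        using J by (intro prod.union_disjoint) auto
      finally show ?thesis .
    qed
    also have "(\<Prod>i\<in>J - D. emeasure U (A i)) = emeasure Omega ?X1"
      unfolding Omega_def using J A by (intro emeasure_PiM_emb[symmetric] prob_U) auto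
    also have "(\<Prod>i\<in>J \<inter> D. emeasure U (A i)) = emeasure Omega ?X2"
      unfolding Omega_def using J A by (intro emeasure_PiM_emb[symmetric] prob_U) auto
    also have "emeasure Omega ?X1 * emeasure Omega ?X2 = emeasure (Omega \<Otimes>\<^sub>M Omega) (?X1 \<times> ?X2)"
      using X1S X2S by (intro O.emeasure_pair_measure_Times[symmetric])
    also have "\<dots> = emeasure (distr (Omega \<Otimes>\<^sub>M Omega) (PU) (\<lambda>p. mrg k N (fst p) (snd p))) ?X"
    proof -
      have mm: "(\<lambda>p. mrg k N (fst p) (snd p)) \<in> measurable (Omega \<Otimes>\<^sub>M Omega) PU"
        using mrg_meas[of k N] by (metis Omega_def)
      show ?thesis by (subst emeasure_distr[OF mm XS]) (simp add: pre)
    qed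
    finally show "emeasure (PU) ?X = emeasure (distr (Omega \<Otimes>\<^sub>M Omega) (PU) (\<lambda>p. mrg k N (fst p) (snd p))) ?X" .
  qed
  then show ?thesis unfolding Omega_def by (rule sym)
qed

interpretation O: prob_space Omega by (rule prob_Omega)

lemma card_filter_sum: "finite A \<Longrightarrow> real (card {n\<in>A. P n}) = (\<Sum>n\<in>A. if P n then 1 else 0)"
proof -
  assume "finite A"
  then have "(\<Sum>n\<in>A. if P n then 1 else 0 :: real) = (\<Sum>n\<in>A \<inter> {x. P x}. 1) + (\<Sum>n\<in>A \<inter> - {x. P x}. 0)"
    by (rule sum.If_cases)
  also have "\<dots> = real (card (A \<inter> {x. P x}))" by simp
  also have "A \<inter> {x. P x} = {n\<in>A. P n}" by auto
  finally show ?thesis by simp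
qed

locale GLctx =
  fixes T S :: "nat \<Rightarrow> rsrc \<Rightarrow> bool" and k :: nat and q :: "nat \<Rightarrow> real" and n0 :: nat
  assumes Tm: "\<And>n. {\<omega>. T n \<omega>} \<in> sets Omega" and Sm: "\<And>n. {\<omega>. S n \<omega>} \<in> sets Omega"
  and Tind: "\<And>n N x y. n \<le> N \<Longrightarrow> T n (mrg k N x y) = T n x"
  and Sind: "\<And>n N x y. n < N \<Longrightarrow> S n (mrg k N x y) = S n x"
  and q0: "\<And>j. 0 \<le> q j" and q1: "\<And>j. q j < 1" and qns: "\<not> summable q"
  and sec: "\<And>N x. n0 \<le> N \<Longrightarrow> T N x \<Longrightarrow> (\<forall>n\<in>{n0..<N}. \<not> S n x) \<Longrightarrow>
      measure Omega {y. \<not> S N (mrg k N x y)} \<le> 1 - q (card {n\<in>{n0..<N}. T n x})"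
begin

definition cnt :: "nat \<Rightarrow> rsrc \<Rightarrow> nat" where "cnt N \<omega> = card {n\<in>{n0..<N}. T n \<omega>}"
definition Ev :: "nat \<Rightarrow> nat \<Rightarrow> rsrc set" where
  "Ev N r = {\<omega>. (\<forall>n\<in>{n0..<N}. \<not> S n \<omega>) \<and> cnt N \<omega> = r}"

lemma Tm'[measurable]: "Measurable.pred Omega (T n)"
  using Tm[of n] by (simp add: pred_def)
lemma Sm'[measurable]: "Measurable.pred Omega (S n)"
  using Sm[of n] by (simp add: pred_def)

lemma cnt_real: "real (cnt N \<omega>) = (\<Sum>n\<in>{n0..<N}. if T n \<omega> then 1 else 0)"
  unfolding cnt_def by (rule card_filter_sum) simp

lemma cnt_meas[measurable]: "(\<lambda>\<omega>. real (cnt N \<omega>)) \<in> borel_measurable Omega"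
  unfolding cnt_real by measurable

lemma cnt_eq_meas[measurable]: "Measurable.pred Omega (\<lambda>\<omega>. cnt N \<omega> = r)"
proof -
  have "Measurable.pred Omega (\<lambda>\<omega>. real (cnt N \<omega>) = real r)" by measurable
  then show ?thesis by simp
qed

lemma cnt_le_meas[measurable]: "Measurable.pred Omega (\<lambda>\<omega>. K \<le> cnt N \<omega>)"
proof -
  have "Measurable.pred Omega (\<lambda>\<omega>. real K \<le> real (cnt N \<omega>))" by measurable
  then show ?thesis by simp
qed

lemma Ev_sets[measurable]: "Ev N r \<in> sets Omega"
proof -
  have "Measurable.pred Omega (\<lambda>\<omega>. (\<forall>n\<in>{n0..<N}. \<not> S n \<omega>) \<and> cnt N \<omega> = r)" by measurable
  then show ?thesis by (simp add: pred_def Ev_def)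
qed

lemma cnt_mrg: "n \<le> N \<Longrightarrow> cnt n (mrg k N x y) = cnt n x"
  unfolding cnt_def using Tind by (intro arg_cong[where f=card]) auto

lemma Ev_mrg: "mrg k N x y \<in> Ev N r \<longleftrightarrow> x \<in> Ev N r"
  unfolding Ev_def using Sind cnt_mrg[of N N x y] by auto

lemma KS:
  assumes N: "n0 \<le> N"
  shows "measure Omega (Ev N r \<inter> {\<omega>. T N \<omega>} \<inter> {\<omega>. \<not> S N \<omega>}) \<le> (1 - q r) * measure Omega (Ev N r \<inter> {\<omega>. T N \<omega>})"
proof -
  let ?A = "Ev N r \<inter> {\<omega>. T N \<omega>}"
  let ?X = "?A \<inter> {\<omega>. \<not> S N \<omega>}"
  let ?phi = "\<lambda>p. mrg k N (fst p) (snd p)"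
  let ?Z = "?phi -` ?X \<inter> space (Omega \<Otimes>\<^sub>M Omega)"
  have AS: "?A \<in> sets Omega" by measurable
  have XS: "?X \<in> sets Omega" by measurable
  have ZS: "?Z \<in> sets (Omega \<Otimes>\<^sub>M Omega)" by (rule measurable_sets[OF mrg_meas XS])
  have "emeasure (distr (Omega \<Otimes>\<^sub>M Omega) Omega ?phi) ?X = emeasure (Omega \<Otimes>\<^sub>M Omega) ?Z"
    by (rule emeasure_distr[OF mrg_meas XS])
  then have "emeasure Omega ?X = emeasure (Omega \<Otimes>\<^sub>M Omega) ?Z"
    by (simp only: resample)
  also have "\<dots> = (\<integral>\<^sup>+x. emeasure Omega (Pair x -` ?Z) \<partial>Omega)"
    by (rule O.emeasure_pair_measure_alt[OF ZS])
  also have "\<dots> \<le> (\<integral>\<^sup>+x. ennreal (1 - q r) * indicator ?A x \<partial>Omega)"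
  proof (rule nn_integral_mono)
    fix x :: rsrc
    show "emeasure Omega (Pair x -` ?Z) \<le> ennreal (1 - q r) * indicator ?A x"
    proof (cases "x \<in> ?A")
      case True
      have "Pair x -` ?Z = {y. \<not> S N (mrg k N x y)}"
        using True Ev_mrg[of N x] Tind[of N N x] by (auto simp: space_pair_measure)
      moreover have "cnt N x = r" "\<forall>n\<in>{n0..<N}. \<not> S n x" "T N x" using True by (auto simp: Ev_def)
      ultimately have "measure Omega (Pair x -` ?Z) \<le> 1 - q r"
        using sec[OF N, of x] by (simp add: cnt_def)
      then show ?thesis using True by (auto simp: O.emeasure_eq_measure intro!: ennreal_leI)
    next
      case False
      then have "Pair x -` ?Z = {}"
        using Ev_mrg[of N x] Tind[of N N x] by (auto simp: space_pair_measure)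
      then show ?thesis using False by simp
    qed
  qed
  also have "\<dots> = ennreal (1 - q r) * emeasure Omega ?A"
    by (rule nn_integral_cmult_indicator[OF AS])
  finally have "ennreal (measure Omega ?X) \<le> ennreal (1 - q r) * ennreal (measure Omega ?A)"
    by (simp add: O.emeasure_eq_measure)
  also have "\<dots> = ennreal ((1 - q r) * measure Omega ?A)"
    using q1[of r] by (simp add: ennreal_mult)
  finally show ?thesis
    using q1[of r] by (subst (asm) ennreal_le_iff) auto
qed

definition a :: "nat \<Rightarrow> nat \<Rightarrow> real" where "a N r = measure Omega (Ev N r)"
definition pi :: "nat \<Rightarrow> real" where "pi r = (\<Prod>j<r. 1 - q j)"
definition Phi :: "nat \<Rightarrow> real" where "Phi N = (\<Sum>r\<le>N. a N r / pi r)"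

lemma pi_pos: "0 < pi r"
  unfolding pi_def using q1 by (intro prod_pos) (auto simp: algebra_simps)

lemma pi_Suc: "pi (Suc r) = pi r * (1 - q r)"
  by (simp add: pi_def)

lemma pi_mono: "K \<le> r \<Longrightarrow> pi r \<le> pi K"
proof (induction r rule: dec_induct)
  case (step r)
  have "pi (Suc r) \<le> pi r" unfolding pi_Suc using pi_pos[of r] q0[of r] q1[of r]
    by (simp add: mult_left_le)
  then show ?case using step by simp
qed simp

lemma cnt_le: "cnt N \<omega> \<le> N"
proof -
  have "cnt N \<omega> \<le> card {n0..<N}" unfolding cnt_def by (rule card_mono) auto
  then show ?thesis by simp
qed

lemma Ev_big: "N < r \<Longrightarrow> Ev N r = {}"
  using cnt_le by (auto simp: Ev_def) (metis leD)

lemma Ev_n0: "Ev n0 r = (if r = 0 then UNIV else {})"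
  by (auto simp: Ev_def cnt_def)

lemma cnt_Suc: "n0 \<le> N \<Longrightarrow> cnt (Suc N) \<omega> = cnt N \<omega> + (if T N \<omega> then 1 else 0)"
proof -
  assume N: "n0 \<le> N"
  have "{n\<in>{n0..<Suc N}. T n \<omega>} = (if T N \<omega> then insert N {n\<in>{n0..<N}. T n \<omega>} else {n\<in>{n0..<N}. T n \<omega>})"
    using N by (auto simp: less_Suc_eq)
  then show ?thesis unfolding cnt_def by simp
qed

lemma Ev_step:
  assumes "n0 \<le> N"
  shows "Ev (Suc N) r \<subseteq> (Ev N r - {\<omega>. T N \<omega>}) \<union>
     (if r = 0 then {} else Ev N (r - 1) \<inter> {\<omega>. T N \<omega>} \<inter> {\<omega>. \<not> S N \<omega>})"
  using assms by (auto simp: Ev_def cnt_Suc split: if_splits)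

lemma nS_sets: "{\<omega>. \<not> S N \<omega>} \<in> sets Omega"
proof -
  have "{\<omega>. \<not> S N \<omega>} = space Omega - {\<omega>. S N \<omega>}" by auto
  moreover have "space Omega - {\<omega>. S N \<omega>} \<in> sets Omega" by (rule sets.compl_sets[OF Sm])
  ultimately show ?thesis by simp
qed

lemma evs[simp]: "Ev N r - {\<omega>. T N \<omega>} \<in> sets Omega" "Ev N r \<inter> {\<omega>. T N \<omega>} \<in> sets Omega"
  "Ev N r \<inter> {\<omega>. T N \<omega>} \<inter> {\<omega>. \<not> S N \<omega>} \<in> sets Omega" "Ev N r \<in> sets Omega"
  "finite R \<Longrightarrow> (\<Union>r\<in>R. Ev N r) \<in> sets Omega"
  using Ev_sets Tm nS_sets by auto

lemma a_nonneg: "0 \<le> a N r" by (simp add: a_def)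

lemma a_split: "a N r = measure Omega (Ev N r - {\<omega>. T N \<omega>}) + measure Omega (Ev N r \<inter> {\<omega>. T N \<omega>})"
proof -
  have "Ev N r = (Ev N r - {\<omega>. T N \<omega>}) \<union> (Ev N r \<inter> {\<omega>. T N \<omega>})" by auto
  then have "a N r = measure Omega ((Ev N r - {\<omega>. T N \<omega>}) \<union> (Ev N r \<inter> {\<omega>. T N \<omega>}))"
    unfolding a_def by simp
  also have "\<dots> = measure Omega (Ev N r - {\<omega>. T N \<omega>}) + measure Omega (Ev N r \<inter> {\<omega>. T N \<omega>})"
    by (rule O.finite_measure_Union) (auto)
  finally show ?thesis .
qed

lemma a_step:
  assumes N: "n0 \<le> N"
  shows "a (Suc N) r \<le> measure Omega (Ev N r - {\<omega>. T N \<omega>}) +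
     (if r = 0 then 0 else (1 - q (r - 1)) * measure Omega (Ev N (r - 1) \<inter> {\<omega>. T N \<omega>}))"
proof (cases "r = 0")
  case True
  then have "a (Suc N) r \<le> measure Omega (Ev N r - {\<omega>. T N \<omega>})"
    unfolding a_def using Ev_step[OF N, of r] by (intro O.finite_measure_mono) auto
  then show ?thesis using True by simp
next
  case False
  have "a (Suc N) r \<le> measure Omega ((Ev N r - {\<omega>. T N \<omega>}) \<union> (Ev N (r - 1) \<inter> {\<omega>. T N \<omega>} \<inter> {\<omega>. \<not> S N \<omega>}))"
    unfolding a_def using Ev_step[OF N, of r] False by (intro O.finite_measure_mono) auto
  also have "\<dots> \<le> measure Omega (Ev N r - {\<omega>. T N \<omega>}) + measure Omega (Ev N (r - 1) \<inter> {\<omega>. T N \<omega>} \<inter> {\<omega>. \<not> S N \<omega>})"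
    by (rule measure_Un_le) auto
  also have "\<dots> \<le> measure Omega (Ev N r - {\<omega>. T N \<omega>}) + (1 - q (r - 1)) * measure Omega (Ev N (r - 1) \<inter> {\<omega>. T N \<omega>})"
    using KS[OF N, of "r - 1"] by simp
  finally show ?thesis using False by simp
qed

lemma Phi_step:
  assumes N: "n0 \<le> N"
  shows "Phi (Suc N) \<le> Phi N"
proof -
  define b where "b r = measure Omega (Ev N r - {\<omega>. T N \<omega>})" for r
  define c where "c r = measure Omega (Ev N r \<inter> {\<omega>. T N \<omega>})" for r
  have ab: "a N r = b r + c r" for r unfolding b_def c_def by (rule a_split)
  have each: "a (Suc N) r / pi r \<le> b r / pi r + (if r = 0 then 0 else c (r - 1) / pi (r - 1))" for r
  proof (cases r)
    case 0
    then show ?thesis using a_step[OF N, of r] pi_pos[of r] unfolding b_def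
      by (simp add: divide_right_mono)
  next
    case (Suc r')
    have "a (Suc N) r / pi r \<le> (b r + (1 - q r') * c r') / pi r"
      using a_step[OF N, of r] pi_pos[of r] unfolding b_def c_def Suc
      by (simp add: divide_right_mono)
    also have "\<dots> = b r / pi r + c r' / pi r'"
      using pi_pos[of r'] q1[of r'] unfolding Suc pi_Suc by (simp add: field_simps)
    finally show ?thesis using Suc by simp
  qed
  have "Phi (Suc N) \<le> (\<Sum>r\<le>Suc N. b r / pi r + (if r = 0 then 0 else c (r - 1) / pi (r - 1)))"
    unfolding Phi_def by (intro sum_mono each)
  also have "\<dots> = (\<Sum>r\<le>Suc N. b r / pi r) + (\<Sum>r\<le>Suc N. (if r = 0 then 0 else c (r - 1) / pi (r - 1)))"
    by (rule sum.distrib)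
  also have "(\<Sum>r\<le>Suc N. (if r = 0 then 0 else c (r - 1) / pi (r - 1))) = (\<Sum>r\<le>N. c r / pi r)"
    by (subst sum.atMost_Suc_shift) simp
  also have "(\<Sum>r\<le>Suc N. b r / pi r) = (\<Sum>r\<le>N. b r / pi r)"
  proof -
    have "b (Suc N) = 0" unfolding b_def using Ev_big[of N "Suc N"] by simp
    then show ?thesis by simp
  qed
  also have "(\<Sum>r\<le>N. b r / pi r) + (\<Sum>r\<le>N. c r / pi r) = Phi N"
    unfolding Phi_def ab by (simp add: sum.distrib[symmetric] add_divide_distrib)
  finally show ?thesis .
qed

lemma Phi_n0: "Phi n0 = 1"
proof -
  have "Phi n0 = (\<Sum>r\<le>n0. if r = 0 then 1 else 0)"
    unfolding Phi_def a_def Ev_n0 by (intro sum.cong) (auto simp: pi_def O.prob_space[simplified])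
  also have "\<dots> = 1" by simp
  finally show ?thesis .
qed

lemma Phi_le: "n0 \<le> N \<Longrightarrow> Phi N \<le> 1"
proof (induction N rule: dec_induct)
  case base then show ?case by (simp add: Phi_n0)
next
  case (step N) then show ?case using Phi_step[of N] by simp
qed

lemma tail:
  assumes N: "n0 \<le> N"
  shows "measure Omega {\<omega>. (\<forall>n\<in>{n0..<N}. \<not> S n \<omega>) \<and> K \<le> cnt N \<omega>} \<le> pi K"
proof -
  have "measure Omega {\<omega>. (\<forall>n\<in>{n0..<N}. \<not> S n \<omega>) \<and> K \<le> cnt N \<omega>} \<le> measure Omega (\<Union>r\<in>{K..N}. Ev N r)"
  proof (rule O.finite_measure_mono)
    show "{\<omega>. (\<forall>n\<in>{n0..<N}. \<not> S n \<omega>) \<and> K \<le> cnt N \<omega>} \<subseteq> (\<Union>r\<in>{K..N}. Ev N r)"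
      using cnt_le by (auto simp: Ev_def)
  qed simp
  also have "\<dots> \<le> (\<Sum>r\<in>{K..N}. a N r)"
    unfolding a_def by (rule O.finite_measure_subadditive_finite) (auto simp del: Ev_sets intro: Ev_sets)
  also have "\<dots> \<le> (\<Sum>r\<in>{K..N}. pi K * (a N r / pi r))"
  proof (rule sum_mono)
    fix r assume "r \<in> {K..N}"
    then have "pi r \<le> pi K" by (intro pi_mono) auto
    then have "a N r * pi r \<le> a N r * pi K" using a_nonneg by (intro mult_left_mono) auto
    then show "a N r \<le> pi K * (a N r / pi r)" using pi_pos[of r]
      by (simp add: field_simps)
  qed
  also have "\<dots> = pi K * (\<Sum>r\<in>{K..N}. a N r / pi r)" by (simp add: sum_distrib_left)
  also have "\<dots> \<le> pi K * (\<Sum>r\<le>N. a N r / pi r)"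
    using pi_pos[of K] a_nonneg pi_pos
    by (intro mult_left_mono sum_mono2) (auto intro: divide_nonneg_pos less_imp_le)
  also have "\<dots> \<le> pi K * 1" using Phi_le[OF N] pi_pos[of K] unfolding Phi_def
    by (intro mult_left_mono) auto
  finally show ?thesis by simp
qed

lemma pi_exp: "pi K \<le> exp (- (\<Sum>j<K. q j))"
proof (induction K)
  case 0 then show ?case by (simp add: pi_def)
next
  case (Suc K)
  have "1 - q K \<le> exp (- q K)" using exp_ge_add_one_self[of "- q K"] by simp
  then have "pi K * (1 - q K) \<le> exp (- (\<Sum>j<K. q j)) * exp (- q K)"
    using Suc pi_pos[of K] q1[of K] by (intro mult_mono) auto
  then show ?case by (simp add: pi_Suc exp_add[symmetric])
qed

lemma pi_small: assumes "0 < e" shows "\<exists>K. pi K < e"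
proof (rule ccontr)
  assume "\<not> (\<exists>K. pi K < e)"
  then have h: "e \<le> exp (- (\<Sum>j<K. q j))" for K using pi_exp[of K] by (meson le_less_trans not_le)
  have bd: "(\<Sum>j<K. q j) \<le> - ln e" for K
  proof -
    have "ln e \<le> ln (exp (- (\<Sum>j<K. q j)))" using h[of K] assms by (subst ln_le_cancel_iff) auto
    then have "ln e \<le> - (\<Sum>j<K. q j)" by simp
    then show ?thesis by simp
  qed
  have "summable q"
  proof (rule bounded_imp_summable[where B="- ln e"])
    show "0 \<le> q n" for n by (rule q0)
    show "(\<Sum>k\<le>n. q k) \<le> - ln e" for n using bd[of "Suc n"] by (simp add: lessThan_Suc_atMost)
  qed
  then show False using qns by simp
qed

definition G :: "nat \<Rightarrow> nat \<Rightarrow> rsrc set" where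
  "G K N = {\<omega>. (\<forall>n. n0 \<le> n \<longrightarrow> \<not> S n \<omega>) \<and> K \<le> cnt N \<omega>}"

lemma G_sets[measurable]: "G K N \<in> sets Omega"
proof -
  have "Measurable.pred Omega (\<lambda>\<omega>. (\<forall>n. n0 \<le> n \<longrightarrow> \<not> S n \<omega>) \<and> K \<le> cnt N \<omega>)" by measurable
  then show ?thesis by (simp add: pred_def G_def)
qed

lemma cnt_mono: "N \<le> N' \<Longrightarrow> cnt N \<omega> \<le> cnt N' \<omega>"
  unfolding cnt_def by (rule card_mono) auto

lemma G_inc: "incseq (G K)"
  unfolding incseq_def G_def using cnt_mono by (auto intro: le_trans)

lemma G_bound: "measure Omega (G K N) \<le> pi K"
proof -
  let ?N = "max N n0"
  have "measure Omega (G K N) \<le> measure Omega {\<omega>. (\<forall>n\<in>{n0..<?N}. \<not> S n \<omega>) \<and> K \<le> cnt ?N \<omega>}"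
  proof (rule O.finite_measure_mono)
    show "G K N \<subseteq> {\<omega>. (\<forall>n\<in>{n0..<?N}. \<not> S n \<omega>) \<and> K \<le> cnt ?N \<omega>}"
      unfolding G_def using cnt_mono[OF max.cobounded1[of N n0]] by (auto intro: le_trans)
    have "Measurable.pred Omega (\<lambda>\<omega>. (\<forall>n\<in>{n0..<?N}. \<not> S n \<omega>) \<and> K \<le> cnt ?N \<omega>)" by measurable
    then show "{\<omega>. (\<forall>n\<in>{n0..<?N}. \<not> S n \<omega>) \<and> K \<le> cnt ?N \<omega>} \<in> sets Omega" by (simp add: pred_def)
  qed
  also have "\<dots> \<le> pi K" by (rule tail) simp
  finally show ?thesis .
qed

lemma UG_bound: "measure Omega (\<Union>N. G K N) \<le> pi K"
proof -
  have "(\<lambda>N. measure Omega (G K N)) \<longlonglongrightarrow> measure Omega (\<Union>N. G K N)"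
    by (rule O.finite_Lim_measure_incseq) (auto simp: G_inc)
  then show ?thesis by (rule LIMSEQ_le_const2) (auto intro: G_bound)
qed

lemma infinite_cnt:
  assumes "infinite {n. T n \<omega>}" shows "\<exists>N. K \<le> cnt N \<omega>"
proof -
  have "{n. T n \<omega>} \<subseteq> {n. T n \<omega> \<and> n0 \<le> n} \<union> {..<n0}" by auto
  then have "infinite {n. T n \<omega> \<and> n0 \<le> n}" using assms finite_subset by blast
  then obtain B where B: "B \<subseteq> {n. T n \<omega> \<and> n0 \<le> n}" "finite B" "card B = K"
    using infinite_arbitrarily_large by blast
  have "B \<subseteq> {n\<in>{n0..<Suc (Max B)}. T n \<omega>}"
    using B by (auto simp: le_imp_less_Suc)
  then have "card B \<le> cnt (Suc (Max B)) \<omega>" unfolding cnt_def by (intro card_mono) auto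
  then show ?thesis using B by auto
qed

lemma GL_main: "AE \<omega> in Omega. infinite {n. T n \<omega>} \<longrightarrow> (\<exists>n\<ge>n0. S n \<omega>)"
proof (rule AE_I')
  let ?Z = "\<Inter>K. \<Union>N. G K N"
  have ZS: "?Z \<in> sets Omega" by measurable
  have mz: "measure Omega ?Z \<le> pi K" for K
    using UG_bound[of K] by (rule order_trans[rotated]) (intro O.finite_measure_mono, auto)
  have "measure Omega ?Z \<le> 0"
  proof (rule ccontr)
    assume "\<not> measure Omega ?Z \<le> 0"
    then have "0 < measure Omega ?Z" by simp
    then obtain K where "pi K < measure Omega ?Z" using pi_small by blast
    then show False using mz[of K] by simp
  qed
  then have "measure Omega ?Z = 0" by (simp add: antisym)
  then show "?Z \<in> null_sets Omega" using ZS by (simp add: O.emeasure_eq_measure null_sets_def)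
  show "{\<omega> \<in> space Omega. \<not> (infinite {n. T n \<omega>} \<longrightarrow> (\<exists>n\<ge>n0. S n \<omega>))} \<subseteq> ?Z"
  proof
    fix \<omega> assume "\<omega> \<in> {\<omega> \<in> space Omega. \<not> (infinite {n. T n \<omega>} \<longrightarrow> (\<exists>n\<ge>n0. S n \<omega>))}"
    then have inf: "infinite {n. T n \<omega>}" and nS: "\<forall>n. n0 \<le> n \<longrightarrow> \<not> S n \<omega>" by auto
    show "\<omega> \<in> ?Z"
    proof
      fix K
      obtain N where "K \<le> cnt N \<omega>" using infinite_cnt[OF inf] by blast
      then have "\<omega> \<in> G K N" using nS by (simp add: G_def)
      then show "\<omega> \<in> (\<Union>N. G K N)" by blast
    qed
  qed
qed

end


lemma GL:
  fixes T S :: "nat \<Rightarrow> rsrc \<Rightarrow> bool" and k :: nat and q :: "nat \<Rightarrow> nat \<Rightarrow> real"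
  assumes Tm: "\<And>n. {\<omega>. T n \<omega>} \<in> sets Omega" and Sm: "\<And>n. {\<omega>. S n \<omega>} \<in> sets Omega"
  and Tind: "\<And>n N x y. n \<le> N \<Longrightarrow> T n (mrg k N x y) = T n x"
  and Sind: "\<And>n N x y. n < N \<Longrightarrow> S n (mrg k N x y) = S n x"
  and q0: "\<And>n0 j. 0 \<le> q n0 j" and q1: "\<And>n0 j. q n0 j < 1" and qns: "\<And>n0. \<not> summable (q n0)"
  and sec: "\<And>n0 N x. n0 \<le> N \<Longrightarrow> T N x \<Longrightarrow> (\<forall>n\<in>{n0..<N}. \<not> S n x) \<Longrightarrow>
      measure Omega {y. \<not> S N (mrg k N x y)} \<le> 1 - q n0 (card {n\<in>{n0..<N}. T n x})"
  shows "AE \<omega> in Omega. infinite {n. T n \<omega>} \<longrightarrow> infinite {n. S n \<omega>}"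
proof -
  have "AE \<omega> in Omega. infinite {n. T n \<omega>} \<longrightarrow> (\<exists>n\<ge>n0. S n \<omega>)" for n0
  proof -
    interpret GLctx T S k "q n0" n0
      by (rule GLctx.intro[OF Tm Sm Tind Sind q0 q1 qns sec])
    show ?thesis by (rule GL_main)
  qed
  then have ae: "AE \<omega> in Omega. \<forall>n0. infinite {n. T n \<omega>} \<longrightarrow> (\<exists>n\<ge>n0. S n \<omega>)"
    by (subst AE_all_countable) auto
  have imp: "infinite {n. T n \<omega>} \<longrightarrow> infinite {n. S n \<omega>}"
    if h: "\<forall>n0. infinite {n. T n \<omega>} \<longrightarrow> (\<exists>n\<ge>n0. S n \<omega>)" for \<omega>
  proof
    assume "infinite {n. T n \<omega>}"
    then have "\<forall>m. \<exists>n\<ge>m. S n \<omega>" using h by blast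
    then show "infinite {n. S n \<omega>}" by (simp add: infinite_nat_iff_unbounded_le)
  qed
  show ?thesis
    by (rule AE_mp[OF ae], rule AE_I2, rule impI, erule imp)
qed


locale desc =
  fixes m :: nat and ea ez \<gamma> \<epsilon> :: real
  assumes gpos: "0 < \<gamma>" and glt: "\<gamma> < 1" and epos: "0 < \<epsilon>"
begin

abbreviation D where "D \<equiv> cutoff_depth \<gamma> \<epsilon>"

lemma cut_iff: "\<gamma> ^ k < \<epsilon> \<longleftrightarrow> D \<le> k"
proof
  assume "\<gamma> ^ k < \<epsilon>" then show "D \<le> k" unfolding cutoff_depth_def by (rule Least_le)
next
  assume "D \<le> k"
  obtain n where "\<gamma> ^ n < \<epsilon>" using real_arch_pow_inv[OF epos glt] by blast
  then have "\<gamma> ^ D < \<epsilon>" unfolding cutoff_depth_def by (rule LeastI)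
  moreover have "\<gamma> ^ k \<le> \<gamma> ^ D" using \<open>D \<le> k\<close> gpos glt by (intro power_decreasing) auto
  ultimately show "\<gamma> ^ k < \<epsilon>" by simp
qed

definition actT :: "(bnode \<Rightarrow> nat) \<Rightarrow> (nat \<Rightarrow> nat \<Rightarrow> real) \<Rightarrow> bnode \<Rightarrow> nat" where
  "actT g u h = (if u (length h) 0 < ea then min (m - 1) (nat \<lfloor>u (length h) 1 * real m\<rfloor>) else g h)"

definition idxT :: "(nat \<Rightarrow> nat \<Rightarrow> real) \<Rightarrow> nat \<Rightarrow> nat \<Rightarrow> nat" where
  "idxT u k c = min (c - 1) (nat \<lfloor>u k 3 * real c\<rfloor>)"

definition contT :: "tree \<Rightarrow> (bnode \<Rightarrow> nat) \<Rightarrow> (nat \<Rightarrow> nat \<Rightarrow> real) \<Rightarrow> bnode \<Rightarrow> nat \<times> nat \<Rightarrow> bool" where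
  "contT T g u h x = (\<not> \<gamma> ^ length h < \<epsilon> \<and> h \<in> expanded T \<and> actT g u h = fst x \<and>
     nch T h (fst x) \<noteq> 0 \<and> \<not> u (length h) 2 < (real (nch T h (fst x)) + 1) powr ez \<and>
     idxT u (length h) (nch T h (fst x)) = snd x)"

definition crtT :: "tree \<Rightarrow> (bnode \<Rightarrow> nat) \<Rightarrow> (nat \<Rightarrow> nat \<Rightarrow> real) \<Rightarrow> bnode \<Rightarrow> nat \<Rightarrow> bool" where
  "crtT T g u h a = (\<not> \<gamma> ^ length h < \<epsilon> \<and> h \<in> expanded T \<and> actT g u h = a \<and>
     (nch T h a = 0 \<or> u (length h) 2 < (real (nch T h a) + 1) powr ez))"

fun onfrom :: "tree \<Rightarrow> (bnode \<Rightarrow> nat) \<Rightarrow> (nat \<Rightarrow> nat \<Rightarrow> real) \<Rightarrow> bnode \<Rightarrow> (nat \<times> nat) list \<Rightarrow> bool" where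
  "onfrom T g u h0 [] = True"
| "onfrom T g u h0 (x # t) = (contT T g u h0 x \<and> onfrom T g u (h0 @ [x]) t)"

definition reach :: "tree \<Rightarrow> (bnode \<Rightarrow> nat) \<Rightarrow> (nat \<Rightarrow> nat \<Rightarrow> real) \<Rightarrow> bnode \<Rightarrow> bnode \<Rightarrow> bool" where
  "reach T g u h0 h = (\<exists>t. h = h0 @ t \<and> onfrom T g u h0 t)"

lemma reach_step: "reach T g u h0 h \<longleftrightarrow> h = h0 \<or> (\<exists>x. contT T g u h0 x \<and> reach T g u (h0 @ [x]) h)"
proof
  assume "reach T g u h0 h"
  then obtain t where t: "h = h0 @ t" "onfrom T g u h0 t" by (auto simp: reach_def)
  show "h = h0 \<or> (\<exists>x. contT T g u h0 x \<and> reach T g u (h0 @ [x]) h)"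
  proof (cases t)
    case Nil then show ?thesis using t by simp
  next
    case (Cons x t')
    then show ?thesis using t by (intro disjI2 exI[of _ x]) (auto simp: reach_def)
  qed
next
  assume "h = h0 \<or> (\<exists>x. contT T g u h0 x \<and> reach T g u (h0 @ [x]) h)"
  then show "reach T g u h0 h"
  proof
    assume "h = h0" then show ?thesis unfolding reach_def by (intro exI[of _ "[]"]) simp
  next
    assume "\<exists>x. contT T g u h0 x \<and> reach T g u (h0 @ [x]) h"
    then obtain x t where "contT T g u h0 x" "h = h0 @ [x] @ t" "onfrom T g u (h0 @ [x]) t"
      by (auto simp: reach_def)
    then show ?thesis unfolding reach_def by (intro exI[of _ "x # t"]) simp
  qed
qed

definition descR where
  "descR f g u T h0 k = descend m ea ez \<gamma> \<epsilon> f g u T h0 k"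

lemma desc_char:
  assumes "length h0 = k" "D \<le> k + f"
  shows "(\<forall>h. B h \<in> snd (descend m ea ez \<gamma> \<epsilon> (Suc f) g u T h0 k) \<longleftrightarrow> reach T g u h0 h) \<and>
    (\<forall>h a. BA h a \<in> snd (descend m ea ez \<gamma> \<epsilon> (Suc f) g u T h0 k) \<longleftrightarrow>
        reach T g u h0 h \<and> \<not> \<gamma> ^ length h < \<epsilon> \<and> h \<in> expanded T \<and> actT g u h = a) \<and>
    expanded (fst (descend m ea ez \<gamma> \<epsilon> (Suc f) g u T h0 k)) = expanded T \<union> {h. reach T g u h0 h \<and> \<not> \<gamma> ^ length h < \<epsilon>} \<and>
    (\<forall>h a. nch (fst (descend m ea ez \<gamma> \<epsilon> (Suc f) g u T h0 k)) h a =
        nch T h a + (if reach T g u h0 h \<and> crtT T g u h a then 1 else 0)) \<and>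
    created (fst (descend m ea ez \<gamma> \<epsilon> (Suc f) g u T h0 k)) =
        created T \<union> {h @ [(a, nch T h a)] | h a. reach T g u h0 h \<and> crtT T g u h a}"
  using assms
proof (induction f arbitrary: h0 k rule: less_induct)
  case (less f)
  let ?R = "descend m ea ez \<gamma> \<epsilon> (Suc f) g u T h0 k"
  show ?case
  proof (cases "\<gamma> ^ k < \<epsilon>")
    case True
    have r: "reach T g u h0 h \<longleftrightarrow> h = h0" for h
      using True less.prems by (subst reach_step) (auto simp: contT_def)
    have c: "\<not> crtT T g u h0 a" for a using True less.prems by (auto simp: crtT_def)
    have R: "?R = (T, {B h0})" using True by simp
    show ?thesis unfolding R using True less.prems c by (auto simp: r)
  next
    case ng: False
    show ?thesis
    proof (cases "h0 \<in> expanded T")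
      case False
      have r: "reach T g u h0 h \<longleftrightarrow> h = h0" for h
        using False by (subst reach_step) (auto simp: contT_def)
      have c: "\<not> crtT T g u h0 a" for a using False by (auto simp: crtT_def)
      have R: "?R = (T\<lparr>expanded := insert h0 (expanded T)\<rparr>, {B h0})" using ng False by simp
      show ?thesis unfolding R using ng False less.prems c by (auto simp: r)
    next
      case ex: True
      define a where "a = actT g u h0"
      define c where "c = nch T h0 a"
      have a': "(if u k 0 < ea then min (m - 1) (nat \<lfloor>u k 1 * real m\<rfloor>) else g h0) = a"
        using less.prems by (simp add: a_def actT_def)
      show ?thesis
      proof (cases "c = 0 \<or> u k 2 < (real c + 1) powr ez")
        case cr: True
        have r: "reach T g u h0 h \<longleftrightarrow> h = h0" for h
          using cr less.prems by (subst reach_step) (auto simp: contT_def a_def c_def)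
        have crt: "crtT T g u h0 a' \<longleftrightarrow> a' = a" for a'
          using cr less.prems ng ex by (auto simp: crtT_def a_def c_def)
        have R: "?R = (T\<lparr>created := insert (h0 @ [(a, c)]) (created T),
                   nch := (nch T)(h0 := (nch T h0)(a := Suc c))\<rparr>, {B h0, BA h0 a})"
          using ng ex cr by (simp add: a' c_def Let_def)
        show ?thesis unfolding R using ng ex less.prems
          by (auto simp: r crt a_def c_def)
      next
        case cr: False
        define i where "i = idxT u k c"
        have i': "min (c - 1) (nat \<lfloor>u k 3 * real c\<rfloor>) = i" by (simp add: i_def idxT_def)
        have cont: "contT T g u h0 x \<longleftrightarrow> x = (a, i)" for x
          using cr less.prems ng ex by (cases x) (auto simp: contT_def a_def c_def i_def)
        have r: "reach T g u h0 h \<longleftrightarrow> h = h0 \<or> reach T g u (h0 @ [(a, i)]) h" for h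
          by (subst reach_step) (auto simp: cont)
        have crt: "\<not> crtT T g u h0 a'" for a'
          using cr less.prems by (auto simp: crtT_def a_def c_def)
        obtain f' where f': "f = Suc f'" using ng less.prems cut_iff by (cases f) auto
        let ?r = "descend m ea ez \<gamma> \<epsilon> (Suc f') g u T (h0 @ [(a, i)]) (Suc k)"
        have "f' < f" "length (h0 @ [(a, i)]) = Suc k" "D \<le> Suc k + f'" using less.prems f' by auto
        note IH = less.IH[OF this]
        have i'': "min (nch T h0 a - Suc 0) (nat \<lfloor>u k 3 * real (nch T h0 a)\<rfloor>) = i"
          by (simp add: i_def idxT_def c_def)
        have R: "?R = (fst ?r, snd ?r \<union> {B h0, BA h0 a})"
          apply (subst descend.simps(2))
          using ng ex cr i'' by (simp add: a' c_def Let_def f' del: descend.simps)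
        have h0a: "\<not> \<gamma> ^ length h0 < \<epsilon>" "actT g u h0 = a" using ng less.prems by (auto simp: a_def)
        have p1: "\<forall>h. B h \<in> snd ?R \<longleftrightarrow> reach T g u h0 h"
          unfolding R using IH by (auto simp: r simp del: descend.simps)
        have p2: "\<forall>h a'. BA h a' \<in> snd ?R \<longleftrightarrow>
            reach T g u h0 h \<and> \<not> \<gamma> ^ length h < \<epsilon> \<and> h \<in> expanded T \<and> actT g u h = a'"
          unfolding R using IH h0a ex by (auto simp: r simp del: descend.simps)
        have p3: "expanded (fst ?R) = expanded T \<union> {h. reach T g u h0 h \<and> \<not> \<gamma> ^ length h < \<epsilon>}"
          unfolding R using IH ex by (auto simp: r simp del: descend.simps)
        have p4: "\<forall>h a'. nch (fst ?R) h a' = nch T h a' + (if reach T g u h0 h \<and> crtT T g u h a' then 1 else 0)"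
          unfolding R using IH crt by (auto simp: r simp del: descend.simps)
        have p5: "created (fst ?R) = created T \<union> {h @ [(a', nch T h a')] | h a'. reach T g u h0 h \<and> crtT T g u h a'}"
          unfolding R using IH crt by (auto simp: r simp del: descend.simps)
        show ?thesis using p1 p2 p3 p4 p5 by blast
      qed
    qed
  qed
qed

end


declare descend.simps[simp del]

context desc
begin

lemma onfrom_snoc: "onfrom T g u h0 (t @ [x]) \<longleftrightarrow> onfrom T g u h0 t \<and> contT T g u (h0 @ t) x"
  by (induction t arbitrary: h0) auto

lemma reach_Nil: "reach T g u [] h \<longleftrightarrow> onfrom T g u [] h"
  by (simp add: reach_def)

lemma reach_snoc: "reach T g u [] (h @ [x]) \<longleftrightarrow> reach T g u [] h \<and> contT T g u h x"
  by (simp add: reach_Nil onfrom_snoc)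

lemma onfrom_cong:
  assumes "\<And>k'. k' < length h0 + length t \<Longrightarrow> u k' = u' k'"
  shows "onfrom T g u h0 t = onfrom T g u' h0 t"
  using assms
proof (induction t arbitrary: h0)
  case Nil then show ?case by simp
next
  case (Cons x t)
  have "u (length h0) = u' (length h0)" using Cons.prems by simp
  then have "contT T g u h0 x = contT T g u' h0 x" by (simp add: contT_def actT_def idxT_def)
  moreover have "onfrom T g u (h0 @ [x]) t = onfrom T g u' (h0 @ [x]) t"
    using Cons.prems by (intro Cons.IH) auto
  ultimately show ?case by simp
qed

lemma contT_imp: "contT T g u h (a, i) \<Longrightarrow> h \<in> expanded T \<and> i < nch T h a \<and> actT g u h = a \<and> \<not> \<gamma> ^ length h < \<epsilon>"
  by (auto simp: contT_def idxT_def)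

definition inv :: "tree \<Rightarrow> bool" where
  "inv T = ([] \<in> created T \<and> (\<forall>h\<in>expanded T. h \<in> created T \<and> \<not> \<gamma> ^ length h < \<epsilon>) \<and>
     (\<forall>h a i. h @ [(a, i)] \<in> created T \<longleftrightarrow> h \<in> expanded T \<and> i < nch T h a) \<and>
     (\<forall>h a. 0 < nch T h a \<longrightarrow> h \<in> expanded T))"

lemma inv_init: "inv init_tree"
  by (auto simp: inv_def init_tree_def)

lemma reach_created: "inv T \<Longrightarrow> reach T g u [] h \<Longrightarrow> h \<in> created T"
proof (induction h rule: rev_induct)
  case Nil then show ?case by (simp add: inv_def)
next
  case (snoc x h)
  obtain a i where x: "x = (a, i)" by (cases x)
  have "contT T g u h (a, i)" using snoc.prems by (simp add: reach_snoc x)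
  then have "h \<in> expanded T \<and> i < nch T h a" by (simp add: contT_imp)
  then show ?case using snoc.prems(1) by (simp add: inv_def x)
qed

lemma crtT_imp: "crtT T g u h a \<Longrightarrow> h \<in> expanded T \<and> \<not> \<gamma> ^ length h < \<epsilon> \<and> actT g u h = a"
  by (simp add: crtT_def)

abbreviation step :: "(bnode \<Rightarrow> nat) \<Rightarrow> (nat \<Rightarrow> nat \<Rightarrow> real) \<Rightarrow> tree \<Rightarrow> tree" where
  "step g u T \<equiv> fst (descend m ea ez \<gamma> \<epsilon> (Suc D) g u T [] 0)"

abbreviation visits :: "(bnode \<Rightarrow> nat) \<Rightarrow> (nat \<Rightarrow> nat \<Rightarrow> real) \<Rightarrow> tree \<Rightarrow> node set" where
  "visits g u T \<equiv> snd (descend m ea ez \<gamma> \<epsilon> (Suc D) g u T [] 0)"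

lemma dc: "(\<forall>h. B h \<in> visits g u T \<longleftrightarrow> reach T g u [] h) \<and>
    (\<forall>h a. BA h a \<in> visits g u T \<longleftrightarrow>
        reach T g u [] h \<and> \<not> \<gamma> ^ length h < \<epsilon> \<and> h \<in> expanded T \<and> actT g u h = a) \<and>
    expanded (step g u T) = expanded T \<union> {h. reach T g u [] h \<and> \<not> \<gamma> ^ length h < \<epsilon>} \<and>
    (\<forall>h a. nch (step g u T) h a = nch T h a + (if reach T g u [] h \<and> crtT T g u h a then 1 else 0)) \<and>
    created (step g u T) = created T \<union> {h @ [(a, nch T h a)] | h a. reach T g u [] h \<and> crtT T g u h a}"
  by (rule desc_char) auto

lemma visB: "B h \<in> visits g u T \<longleftrightarrow> reach T g u [] h" using dc by blast
lemma visBA: "BA h a \<in> visits g u T \<longleftrightarrow> reach T g u [] h \<and> \<not> \<gamma> ^ length h < \<epsilon> \<and> h \<in> expanded T \<and> actT g u h = a"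
  using dc by blast
lemma step_exp: "expanded (step g u T) = expanded T \<union> {h. reach T g u [] h \<and> \<not> \<gamma> ^ length h < \<epsilon>}"
  using dc by blast
lemma step_nch: "nch (step g u T) h a = nch T h a + (if reach T g u [] h \<and> crtT T g u h a then 1 else 0)"
  using dc by blast
lemma step_cr: "created (step g u T) = created T \<union> {h @ [(a, nch T h a)] | h a. reach T g u [] h \<and> crtT T g u h a}"
  using dc by blast

lemma inv_step:
  assumes I: "inv T" shows "inv (step g u T)"
proof -
  let ?T = "step g u T"
  have I1: "[] \<in> created T" and I2: "\<forall>h\<in>expanded T. h \<in> created T \<and> \<not> \<gamma> ^ length h < \<epsilon>"
    and I3: "\<And>h a i. h @ [(a, i)] \<in> created T \<longleftrightarrow> h \<in> expanded T \<and> i < nch T h a"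
    and I4: "\<And>h a. 0 < nch T h a \<Longrightarrow> h \<in> expanded T"
    using I unfolding inv_def by blast+
  have "[] \<in> created ?T" using I1 by (simp add: step_cr)
  moreover have "\<forall>h\<in>expanded ?T. h \<in> created ?T \<and> \<not> \<gamma> ^ length h < \<epsilon>"
    using I2 reach_created[OF I] by (auto simp: step_exp step_cr)
  moreover have "h @ [(a, i)] \<in> created ?T \<longleftrightarrow> h \<in> expanded ?T \<and> i < nch ?T h a" for h a i
  proof
    assume "h @ [(a, i)] \<in> created ?T"
    then consider "h @ [(a, i)] \<in> created T" | "reach T g u [] h \<and> crtT T g u h a \<and> i = nch T h a"
      by (auto simp: step_cr)
    then show "h \<in> expanded ?T \<and> i < nch ?T h a"
    proof cases
      case 1 then show ?thesis using I3 by (auto simp: step_exp step_nch)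
    next
      case 2 then show ?thesis using crtT_imp by (auto simp: step_exp step_nch)
    qed
  next
    assume h: "h \<in> expanded ?T \<and> i < nch ?T h a"
    show "h @ [(a, i)] \<in> created ?T"
    proof (cases "reach T g u [] h \<and> crtT T g u h a")
      case True
      then have ex: "h \<in> expanded T" using crtT_imp by blast
      have "i < nch T h a \<or> i = nch T h a" using h True by (auto simp: step_nch)
      then show ?thesis using True ex I3 by (auto simp: step_cr)
    next
      case False
      then have "i < nch T h a" using h by (auto simp: step_nch split: if_splits)
      then have "h \<in> expanded T" using I4[of h a] by simp
      then show ?thesis using I3 \<open>i < nch T h a\<close> by (auto simp: step_cr)
    qed
  qed
  moreover have "0 < nch ?T h a \<longrightarrow> h \<in> expanded ?T" for h a
    using I4 crtT_imp by (auto simp: step_nch step_exp split: if_splits)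
  ultimately show ?thesis unfolding inv_def by blast
qed

lemma step_mono: "expanded T \<subseteq> expanded (step g u T)" "created T \<subseteq> created (step g u T)"
  "nch T h a \<le> nch (step g u T) h a" "nch (step g u T) h a \<le> nch T h a + 1"
  by (auto simp: step_exp step_cr step_nch)

end


declare descend.simps[simp del]

locale pomcp = desc m ea ez \<gamma> \<epsilon> for m ea ez \<gamma> \<epsilon> +
  fixes G :: "nat \<Rightarrow> bnode \<Rightarrow> rsrc \<Rightarrow> nat"
  assumes mpos: "0 < m" and eapos: "0 < ea" and ealt: "ea < 1" and ezneg: "ez < 0"
  and Glt: "\<And>n h \<omega>. G n h \<omega> < m"
  and Gdep: "\<And>n h \<omega> \<omega>'. (\<And>n' k j. n' < n \<Longrightarrow> \<omega> (n', k, j) = \<omega>' (n', k, j)) \<Longrightarrow> G n h \<omega> = G n h \<omega>'"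
  and Gmeas: "\<And>n h. (\<lambda>\<omega>. G n h \<omega>) \<in> measurable Omega (count_space UNIV)"
begin

definition tr :: "rsrc \<Rightarrow> nat \<Rightarrow> tree" where "tr \<omega> n = pomcp_tree m ea ez \<gamma> \<epsilon> G \<omega> n"
definition gg :: "nat \<Rightarrow> rsrc \<Rightarrow> bnode \<Rightarrow> nat" where "gg n \<omega> = (\<lambda>h. G n h \<omega>)"
definition uu :: "nat \<Rightarrow> rsrc \<Rightarrow> nat \<Rightarrow> nat \<Rightarrow> real" where "uu n \<omega> = (\<lambda>k j. \<omega> (n, k, j))"
definition onp :: "nat \<Rightarrow> rsrc \<Rightarrow> bnode \<Rightarrow> bool" where "onp n \<omega> h = reach (tr \<omega> n) (gg n \<omega>) (uu n \<omega>) [] h"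
definition act :: "nat \<Rightarrow> rsrc \<Rightarrow> bnode \<Rightarrow> nat" where "act n \<omega> h = actT (gg n \<omega>) (uu n \<omega>) h"

lemma tr_0: "tr \<omega> 0 = init_tree" by (simp add: tr_def)
lemma tr_Suc: "tr \<omega> (Suc n) = step (gg n \<omega>) (uu n \<omega>) (tr \<omega> n)"
  by (simp add: tr_def gg_def uu_def)
lemma vis_eq: "pomcp_visited m ea ez \<gamma> \<epsilon> G \<omega> n = visits (gg n \<omega>) (uu n \<omega>) (tr \<omega> n)"
  by (simp add: pomcp_visited_def tr_def gg_def uu_def)

lemma visB': "B h \<in> pomcp_visited m ea ez \<gamma> \<epsilon> G \<omega> n \<longleftrightarrow> onp n \<omega> h"
  by (simp add: vis_eq visB onp_def)
lemma visBA': "BA h a \<in> pomcp_visited m ea ez \<gamma> \<epsilon> G \<omega> n \<longleftrightarrow>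
    onp n \<omega> h \<and> \<not> \<gamma> ^ length h < \<epsilon> \<and> h \<in> expanded (tr \<omega> n) \<and> act n \<omega> h = a"
  by (simp add: vis_eq visBA onp_def act_def)

lemma inv_tr: "inv (tr \<omega> n)"
  by (induction n) (auto simp: tr_0 tr_Suc inv_init inv_step)

lemma tr_mono:
  assumes "n \<le> n'"
  shows "expanded (tr \<omega> n) \<subseteq> expanded (tr \<omega> n')" "created (tr \<omega> n) \<subseteq> created (tr \<omega> n')"
    "nch (tr \<omega> n) h a \<le> nch (tr \<omega> n') h a"
proof -
  show "expanded (tr \<omega> n) \<subseteq> expanded (tr \<omega> n')" using assms
  proof (induction n' rule: dec_induct)
    case (step k) then show ?case unfolding tr_Suc using step_mono(1)[of "tr \<omega> k"] by blast
  qed simp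
  show "created (tr \<omega> n) \<subseteq> created (tr \<omega> n')" using assms
  proof (induction n' rule: dec_induct)
    case (step k) then show ?case unfolding tr_Suc using step_mono(2)[of "tr \<omega> k"] by blast
  qed simp
  show "nch (tr \<omega> n) h a \<le> nch (tr \<omega> n') h a" using assms
  proof (induction n' rule: dec_induct)
    case (step k) then show ?case unfolding tr_Suc using step_mono(3)[of "tr \<omega> k" h a "gg k \<omega>" "uu k \<omega>"] by linarith
  qed simp
qed

lemma nch_le: "nch (tr \<omega> n) h a \<le> n"
proof (induction n)
  case 0 then show ?case by (simp add: tr_0 init_tree_def)
next
  case (Suc n) then show ?case using step_mono(4)[of "gg n \<omega>" "uu n \<omega>" "tr \<omega> n" h a] by (simp add: tr_Suc)
qed

lemma tr_dep: "(\<And>n' k j. n' < n \<Longrightarrow> \<omega> (n', k, j) = \<omega>' (n', k, j)) \<Longrightarrow> tr \<omega> n = tr \<omega>' n"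
proof (induction n)
  case 0 then show ?case by (simp add: tr_0)
next
  case (Suc n)
  have "tr \<omega> n = tr \<omega>' n" using Suc by simp
  moreover have "gg n \<omega> = gg n \<omega>'" unfolding gg_def using Suc.prems by (intro ext Gdep) auto
  moreover have "uu n \<omega> = uu n \<omega>'" unfolding uu_def using Suc.prems by (intro ext) auto
  ultimately show ?case by (simp add: tr_Suc)
qed

lemma onp_dep:
  assumes "\<And>n' k j. n' < n \<Longrightarrow> \<omega> (n', k, j) = \<omega>' (n', k, j)"
    and "\<And>k j. k < length h \<Longrightarrow> \<omega> (n, k, j) = \<omega>' (n, k, j)"
  shows "onp n \<omega> h = onp n \<omega>' h"
proof -
  have "tr \<omega> n = tr \<omega>' n" using assms(1) by (rule tr_dep)
  moreover have "gg n \<omega> = gg n \<omega>'" unfolding gg_def using assms(1) by (intro ext Gdep) auto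
  moreover have "onfrom (tr \<omega>' n) (gg n \<omega>') (uu n \<omega>) [] h = onfrom (tr \<omega>' n) (gg n \<omega>') (uu n \<omega>') [] h"
    using assms(2) by (intro onfrom_cong) (auto simp: uu_def)
  ultimately show ?thesis by (simp add: onp_def reach_Nil)
qed

lemma act_dep:
  assumes "\<And>n' k j. n' < n \<Longrightarrow> \<omega> (n', k, j) = \<omega>' (n', k, j)"
    and "\<And>j. \<omega> (n, length h, j) = \<omega>' (n, length h, j)"
  shows "act n \<omega> h = act n \<omega>' h"
proof -
  have "G n h \<omega> = G n h \<omega>'" using assms(1) by (intro Gdep) auto
  then show ?thesis using assms(2) by (simp add: act_def actT_def gg_def uu_def)
qed

lemma mrg_other: "n' \<noteq> N \<or> k' \<noteq> k \<Longrightarrow> mrg k N x y (n', k', j) = x (n', k', j)"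
  by (auto simp: mrg_def)

end


declare descend.simps[simp del]

lemma cs_comp: "f \<in> measurable M (count_space UNIV) \<Longrightarrow> (\<lambda>\<omega>. F (f \<omega>)) \<in> measurable M (count_space UNIV)"
  by (rule measurable_compose[OF _ measurable_count_space])

lemma pred_countable:
  fixes f :: "'a \<Rightarrow> 'i::countable"
  assumes "f \<in> measurable M (count_space UNIV)" and "\<And>c. Measurable.pred M (\<lambda>\<omega>. P c \<omega>)"
  shows "Measurable.pred M (\<lambda>\<omega>. P (f \<omega>) \<omega>)"
  by (rule measurable_compose_countable[OF assms(2) assms(1)])

lemma floor_cs: "f \<in> borel_measurable M \<Longrightarrow> (\<lambda>\<omega>. \<lfloor>f \<omega> :: real\<rfloor>) \<in> measurable M (count_space UNIV)"
  by (rule measurable_compose[OF _ measurable_real_floor])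

context pomcp
begin

lemma coordc[measurable]: "(\<lambda>\<omega>. \<omega> (n, k, j)) \<in> borel_measurable Omega"
  by (rule coord_meas)

lemma act_meas:
  "(\<lambda>\<omega>. act n \<omega> h) \<in> measurable Omega (count_space UNIV)"
proof -
  have e: "act n \<omega> h = (if \<omega> (n, length h, 0) < ea then min (m - 1) (nat \<lfloor>\<omega> (n, length h, 1) * real m\<rfloor>) else G n h \<omega>)" for \<omega>
    by (simp add: act_def actT_def gg_def uu_def)
  have T: "(\<lambda>\<omega>. min (m - 1) (nat \<lfloor>\<omega> (n, length h, 1) * real m\<rfloor>)) \<in> measurable Omega (count_space UNIV)"
    by (rule cs_comp[OF floor_cs]) measurable
  have P: "Measurable.pred Omega (\<lambda>\<omega>. \<omega> (n, length h, 0) < ea)" by measurable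
  show ?thesis unfolding e by (rule measurable_If[OF T Gmeas P[unfolded pred_def]])
qed

definition Hyp :: "nat \<Rightarrow> bool" where
  "Hyp n = ((\<forall>h. Measurable.pred Omega (\<lambda>\<omega>. h \<in> expanded (tr \<omega> n))) \<and>
     (\<forall>h a. (\<lambda>\<omega>. nch (tr \<omega> n) h a) \<in> measurable Omega (count_space UNIV)))"

lemma cont_meas:
  assumes "Hyp n"
  shows "Measurable.pred Omega (\<lambda>\<omega>. contT (tr \<omega> n) (gg n \<omega>) (uu n \<omega>) h x)"
proof -
  obtain a i where x: "x = (a, i)" by (cases x)
  have E: "Measurable.pred Omega (\<lambda>\<omega>. h \<in> expanded (tr \<omega> n))"
    and Nc: "(\<lambda>\<omega>. nch (tr \<omega> n) h a) \<in> measurable Omega (count_space UNIV)"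
    using assms by (auto simp: Hyp_def)
  have A: "Measurable.pred Omega (\<lambda>\<omega>. act n \<omega> h = a)"
    by (rule pred_count_space_const1[OF act_meas])
  have C: "Measurable.pred Omega (\<lambda>\<omega>. c \<noteq> 0 \<and> \<not> \<omega> (n, length h, 2) < (real c + 1) powr ez \<and>
      min (c - 1) (nat \<lfloor>\<omega> (n, length h, 3) * real c\<rfloor>) = i)" for c :: nat
  proof -
    have "(\<lambda>\<omega>. min (c - 1) (nat \<lfloor>\<omega> (n, length h, 3) * real c\<rfloor>)) \<in> measurable Omega (count_space UNIV)"
      by (rule cs_comp[OF floor_cs]) measurable
    then have "Measurable.pred Omega (\<lambda>\<omega>. min (c - 1) (nat \<lfloor>\<omega> (n, length h, 3) * real c\<rfloor>) = i)"
      by (rule pred_count_space_const1)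
    moreover have "Measurable.pred Omega (\<lambda>\<omega>. \<not> \<omega> (n, length h, 2) < (real c + 1) powr ez)" by measurable
    ultimately show ?thesis by measurable
  qed
  have C': "Measurable.pred Omega (\<lambda>\<omega>. nch (tr \<omega> n) h a \<noteq> 0 \<and> \<not> \<omega> (n, length h, 2) < (real (nch (tr \<omega> n) h a) + 1) powr ez \<and>
      min (nch (tr \<omega> n) h a - 1) (nat \<lfloor>\<omega> (n, length h, 3) * real (nch (tr \<omega> n) h a)\<rfloor>) = i)"
    by (rule pred_countable[OF Nc C])
  have e: "contT (tr \<omega> n) (gg n \<omega>) (uu n \<omega>) h x = (\<not> \<gamma> ^ length h < \<epsilon> \<and> h \<in> expanded (tr \<omega> n) \<and> act n \<omega> h = a \<and>
      (nch (tr \<omega> n) h a \<noteq> 0 \<and> \<not> \<omega> (n, length h, 2) < (real (nch (tr \<omega> n) h a) + 1) powr ez \<and>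
      min (nch (tr \<omega> n) h a - 1) (nat \<lfloor>\<omega> (n, length h, 3) * real (nch (tr \<omega> n) h a)\<rfloor>) = i))" for \<omega>
    by (simp add: contT_def x act_def uu_def idxT_def)
  show ?thesis unfolding e using E A C' by measurable
qed

lemma onp_meas:
  assumes "Hyp n"
  shows "Measurable.pred Omega (\<lambda>\<omega>. onp n \<omega> h)"
proof (induction h rule: rev_induct)
  case Nil
  have "onp n \<omega> [] = True" for \<omega> by (simp add: onp_def reach_Nil)
  then show ?case by simp
next
  case (snoc x h)
  have e: "onp n \<omega> (h @ [x]) = (onp n \<omega> h \<and> contT (tr \<omega> n) (gg n \<omega>) (uu n \<omega>) h x)" for \<omega>
    by (simp add: onp_def reach_snoc)
  show ?case unfolding e using snoc cont_meas[OF assms] by measurable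
qed

lemma crt_meas:
  assumes "Hyp n"
  shows "Measurable.pred Omega (\<lambda>\<omega>. crtT (tr \<omega> n) (gg n \<omega>) (uu n \<omega>) h a)"
proof -
  have E: "Measurable.pred Omega (\<lambda>\<omega>. h \<in> expanded (tr \<omega> n))"
    and Nc: "(\<lambda>\<omega>. nch (tr \<omega> n) h a) \<in> measurable Omega (count_space UNIV)"
    using assms by (auto simp: Hyp_def)
  have A: "Measurable.pred Omega (\<lambda>\<omega>. act n \<omega> h = a)"
    by (rule pred_count_space_const1[OF act_meas])
  have C: "Measurable.pred Omega (\<lambda>\<omega>. c = 0 \<or> \<omega> (n, length h, 2) < (real c + 1) powr ez)" for c :: nat
    by measurable
  have C': "Measurable.pred Omega (\<lambda>\<omega>. nch (tr \<omega> n) h a = 0 \<or> \<omega> (n, length h, 2) < (real (nch (tr \<omega> n) h a) + 1) powr ez)"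
    by (rule pred_countable[OF Nc C])
  have e: "crtT (tr \<omega> n) (gg n \<omega>) (uu n \<omega>) h a = (\<not> \<gamma> ^ length h < \<epsilon> \<and> h \<in> expanded (tr \<omega> n) \<and> act n \<omega> h = a \<and>
      (nch (tr \<omega> n) h a = 0 \<or> \<omega> (n, length h, 2) < (real (nch (tr \<omega> n) h a) + 1) powr ez))" for \<omega>
    by (simp add: crtT_def act_def uu_def)
  show ?thesis unfolding e using E A C' by measurable
qed

lemma Hyp_all: "Hyp n"
proof (induction n)
  case 0
  show ?case by (simp add: Hyp_def tr_0 init_tree_def)
next
  case (Suc n)
  have "Measurable.pred Omega (\<lambda>\<omega>. h \<in> expanded (tr \<omega> (Suc n)))" for h
  proof -
    have e: "h \<in> expanded (tr \<omega> (Suc n)) \<longleftrightarrow> h \<in> expanded (tr \<omega> n) \<or> (onp n \<omega> h \<and> \<not> \<gamma> ^ length h < \<epsilon>)" for \<omega>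
      by (simp add: tr_Suc step_exp onp_def)
    have E: "Measurable.pred Omega (\<lambda>\<omega>. h \<in> expanded (tr \<omega> n))" using Suc by (simp add: Hyp_def)
    show ?thesis unfolding e using E onp_meas[OF Suc, of h] by measurable
  qed
  moreover have "(\<lambda>\<omega>. nch (tr \<omega> (Suc n)) h a) \<in> measurable Omega (count_space UNIV)" for h a
  proof -
    have e: "nch (tr \<omega> (Suc n)) h a = (if onp n \<omega> h \<and> crtT (tr \<omega> n) (gg n \<omega>) (uu n \<omega>) h a then Suc (nch (tr \<omega> n) h a) else nch (tr \<omega> n) h a)" for \<omega>
      by (simp add: tr_Suc step_nch onp_def)
    have N: "(\<lambda>\<omega>. nch (tr \<omega> n) h a) \<in> measurable Omega (count_space UNIV)" using Suc by (simp add: Hyp_def)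
    have P: "Measurable.pred Omega (\<lambda>\<omega>. onp n \<omega> h \<and> crtT (tr \<omega> n) (gg n \<omega>) (uu n \<omega>) h a)"
      using onp_meas[OF Suc] crt_meas[OF Suc] by measurable
    show ?thesis unfolding e by (rule measurable_If[OF cs_comp[OF N] N P[unfolded pred_def]])
  qed
  ultimately show ?case by (simp add: Hyp_def)
qed

lemma exp_meas[measurable]: "Measurable.pred Omega (\<lambda>\<omega>. h \<in> expanded (tr \<omega> n))"
  using Hyp_all by (simp add: Hyp_def)
lemma nch_meas[measurable]: "(\<lambda>\<omega>. nch (tr \<omega> n) h a) \<in> measurable Omega (count_space UNIV)"
  using Hyp_all by (simp add: Hyp_def)
lemma onp_meas'[measurable]: "Measurable.pred Omega (\<lambda>\<omega>. onp n \<omega> h)"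
  using onp_meas[OF Hyp_all] .
lemma act_eq_meas[measurable]: "Measurable.pred Omega (\<lambda>\<omega>. act n \<omega> h = a)"
  by (rule pred_count_space_const1[OF act_meas])

end


declare descend.simps[simp del]

lemma box_measure:
  assumes J: "finite J" and A: "\<And>i. i \<in> J \<Longrightarrow> A i \<in> sets borel"
  shows "measure Omega {y. \<forall>i\<in>J. y i \<in> A i} = (\<Prod>i\<in>J. measure U (A i))"
proof -
  interpret UU: prob_space U by (rule prob_U)
  have e: "{y. \<forall>i\<in>J. y i \<in> A i} = prod_emb UNIV (\<lambda>_. U) J (Pi\<^sub>E J A)"
    by (auto simp: prod_emb_Omega)
  have "emeasure Omega {y. \<forall>i\<in>J. y i \<in> A i} = (\<Prod>i\<in>J. emeasure U (A i))"
    unfolding e Omega_def using J A by (intro emeasure_PiM_emb prob_U) auto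
  also have "\<dots> = (\<Prod>i\<in>J. ennreal (measure U (A i)))" by (simp add: UU.emeasure_eq_measure)
  also have "\<dots> = ennreal (\<Prod>i\<in>J. measure U (A i))" by (rule prod_ennreal) simp
  finally have "ennreal (measure Omega {y. \<forall>i\<in>J. y i \<in> A i}) = ennreal (\<Prod>i\<in>J. measure U (A i))"
    by (simp add: O.emeasure_eq_measure)
  then show ?thesis by (subst (asm) ennreal_inj) (auto intro: prod_nonneg)
qed

lemma mU_Ico: "0 \<le> a \<Longrightarrow> a \<le> b \<Longrightarrow> b \<le> 1 \<Longrightarrow> measure U {a..<b} = b - a"
proof -
  assume h: "0 \<le> a" "a \<le> b" "b \<le> 1"
  have "{0..1::real} \<inter> {a..<b} = {a..<b}" using h by auto
  then show ?thesis using h by (subst measure_uniform_measure) auto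
qed

lemma mU_lt: "0 \<le> a \<Longrightarrow> a \<le> 1 \<Longrightarrow> measure U {..<a} = a"
proof -
  assume h: "0 \<le> a" "a \<le> 1"
  have "{0..1::real} \<inter> {..<a} = {0..<a}" using h by auto
  then show ?thesis using h by (subst measure_uniform_measure) auto
qed

lemma mU_ge: "0 \<le> a \<Longrightarrow> a \<le> 1 \<Longrightarrow> measure U {a..} = 1 - a"
proof -
  assume h: "0 \<le> a" "a \<le> 1"
  have "{0..1::real} \<inter> {a..} = {a..1}" using h by auto
  then show ?thesis using h by (subst measure_uniform_measure) auto
qed

lemma floor_idx:
  fixes y :: real and c i :: nat
  assumes "0 < c" "real i / real c \<le> y" "y < (real i + 1) / real c"
  shows "nat \<lfloor>y * real c\<rfloor> = i"
proof -
  have "real i \<le> y * real c" "y * real c < real i + 1" using assms by (auto simp: field_simps)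
  then have "\<lfloor>y * real c\<rfloor> = int i" by (intro floor_unique) auto
  then show ?thesis by simp
qed

lemma mrg_meas1: "(\<lambda>y. mrg k N x y) \<in> measurable Omega Omega"
proof -
  have "(\<lambda>y. (x, y)) \<in> measurable Omega (Omega \<Otimes>\<^sub>M Omega)" by measurable
  from measurable_compose[OF this mrg_meas] show ?thesis by simp
qed

lemma compl_bound:
  assumes S: "Measurable.pred Omega P" and box: "Bx \<in> sets Omega" "\<And>y. y \<in> Bx \<Longrightarrow> P y"
  shows "measure Omega {y. \<not> P y} \<le> 1 - measure Omega Bx"
proof -
  have "measure Omega {y. \<not> P y} \<le> measure Omega (space Omega - Bx)"
    using box sets.compl_sets[OF box(1)] by (intro O.finite_measure_mono) auto
  also have "\<dots> = 1 - measure Omega Bx" using O.prob_compl[OF box(1)] by simp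
  finally show ?thesis .
qed


context pomcp
begin

lemma tr_mrg: "n \<le> N \<Longrightarrow> tr (mrg k N x y) n = tr x n"
  by (rule tr_dep) (auto simp: mrg_other)

lemma onp_mrg: "n < N \<or> (n = N \<and> length h \<le> k) \<Longrightarrow> onp n (mrg k N x y) h = onp n x h"
  by (rule onp_dep) (auto simp: mrg_other)

lemma act_mrg: "n < N \<Longrightarrow> act n (mrg k N x y) h = act n x h"
  by (rule act_dep) (auto simp: mrg_other)

lemma pred_sets: "Measurable.pred Omega P \<Longrightarrow> {\<omega>. P \<omega>} \<in> sets Omega"
  by (simp add: pred_def)

lemma pred_mrg: "Measurable.pred Omega P \<Longrightarrow> Measurable.pred Omega (\<lambda>y. P (mrg k N x y))"
  by (rule measurable_compose[OF mrg_meas1])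

lemma exp_gamma: "h \<in> expanded (tr \<omega> n) \<Longrightarrow> \<not> \<gamma> ^ length h < \<epsilon>"
  using inv_tr[of \<omega> n] by (auto simp: inv_def)

lemma act_box:
  assumes "a < m" "y (N, length h, 0) < ea" "real a / real m \<le> y (N, length h, 1)" "y (N, length h, 1) < (real a + 1) / real m"
  shows "act N (mrg (length h) N x y) h = a"
proof -
  have "nat \<lfloor>y (N, length h, 1) * real m\<rfloor> = a" using assms mpos by (intro floor_idx) auto
  then show ?thesis using assms by (simp add: act_def actT_def uu_def mrg_def)
qed

lemma box2:
  assumes "a < m"
  shows "measure Omega {y. y (N, k, 0) < ea \<and> real a / real m \<le> y (N, k, 1) \<and> y (N, k, 1) < (real a + 1) / real m} = ea / real m"
proof -
  let ?J = "{(N, k, 0::nat), (N, k, 1::nat)}"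
  let ?A = "\<lambda>i. if i = (N, k, 0::nat) then {..<ea} else {real a / real m..<(real a + 1) / real m}"
  have e: "{y. y (N, k, 0) < ea \<and> real a / real m \<le> y (N, k, 1) \<and> y (N, k, 1) < (real a + 1) / real m} = {y. \<forall>i\<in>?J. y i \<in> ?A i}"
    by simp
  have "measure Omega {y. \<forall>i\<in>?J. y i \<in> ?A i} = (\<Prod>i\<in>?J. measure U (?A i))"
    by (rule box_measure) auto
  also have "\<dots> = measure U {..<ea} * measure U {real a / real m..<(real a + 1) / real m}" by simp
  also have "\<dots> = ea * ((real a + 1) / real m - real a / real m)"
  proof -
    have "measure U {..<ea} = ea" using eapos ealt by (intro mU_lt) auto
    moreover have "measure U {real a / real m..<(real a + 1) / real m} = (real a + 1) / real m - real a / real m"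
    proof (rule mU_Ico)
      show "0 \<le> real a / real m" by simp
      show "real a / real m \<le> (real a + 1) / real m" using mpos by (simp add: divide_right_mono)
      have "real a + 1 \<le> real m" using assms by simp
      then show "(real a + 1) / real m \<le> 1" using mpos by simp
    qed
    ultimately show ?thesis by simp
  qed
  also have "\<dots> = ea / real m" using mpos by (simp add: field_simps)
  finally show ?thesis unfolding e .
qed

definition T2 :: "bnode \<Rightarrow> nat \<Rightarrow> rsrc \<Rightarrow> bool" where
  "T2 h n \<omega> = (onp n \<omega> h \<and> h \<in> expanded (tr \<omega> n))"
definition S2 :: "bnode \<Rightarrow> nat \<Rightarrow> nat \<Rightarrow> rsrc \<Rightarrow> bool" where
  "S2 h a n \<omega> = (onp n \<omega> h \<and> \<not> \<gamma> ^ length h < \<epsilon> \<and> h \<in> expanded (tr \<omega> n) \<and> act n \<omega> h = a)"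

lemma T2_meas[measurable]: "Measurable.pred Omega (T2 h n)"
  unfolding T2_def by measurable
lemma S2_meas[measurable]: "Measurable.pred Omega (S2 h a n)"
  unfolding S2_def by measurable

lemma BA_inst:
  assumes am: "a < m"
  shows "AE \<omega> in Omega. infinite {n. T2 h n \<omega>} \<longrightarrow> infinite {n. S2 h a n \<omega>}"
proof (rule GL[where k = "length h" and q = "\<lambda>n0 j. ea / real m"])
  show "{\<omega>. T2 h n \<omega>} \<in> sets Omega" for n by (rule pred_sets) measurable
  show "{\<omega>. S2 h a n \<omega>} \<in> sets Omega" for n by (rule pred_sets) measurable
  show "T2 h n (mrg (length h) N x y) = T2 h n x" if "n \<le> N" for n N x y
  proof -
    have "n < N \<or> (n = N \<and> length h \<le> length h)" using that by auto
    from onp_mrg[OF this, of x y] show ?thesis using that by (simp add: T2_def tr_mrg)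
  qed
  show "S2 h a n (mrg (length h) N x y) = S2 h a n x" if "n < N" for n N x y
    using that by (auto simp: S2_def tr_mrg onp_mrg act_mrg)
  show "0 \<le> ea / real m" "ea / real m < 1" for n0 j :: nat using eapos ealt mpos by (auto simp: field_simps)
  show "\<not> summable (\<lambda>j. ea / real m)" for n0 using eapos mpos by (simp add: summable_const_iff)
  fix n0 N :: nat and x
  assume T: "T2 h N x"
  let ?Bx = "{y :: rsrc. y (N, length h, 0) < ea \<and> real a / real m \<le> y (N, length h, 1) \<and> y (N, length h, 1) < (real a + 1) / real m}"
  have "measure Omega {y. \<not> S2 h a N (mrg (length h) N x y)} \<le> 1 - measure Omega ?Bx"
  proof (rule compl_bound)
    show "Measurable.pred Omega (\<lambda>y. S2 h a N (mrg (length h) N x y))" by (rule pred_mrg) measurable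
    show "?Bx \<in> sets Omega" by (rule pred_sets) measurable
    fix y assume "y \<in> ?Bx"
    then show "S2 h a N (mrg (length h) N x y)"
      using T am exp_gamma[of h x N] act_box[of a y N h x]
      by (auto simp: S2_def T2_def tr_mrg onp_mrg)
  qed
  then show "measure Omega {y. \<not> S2 h a N (mrg (length h) N x y)} \<le> 1 - ea / real m"
    using box2[OF am] by simp
qed


definition T1 :: "bnode \<Rightarrow> nat \<Rightarrow> nat \<Rightarrow> nat \<Rightarrow> rsrc \<Rightarrow> bool" where
  "T1 h a i n \<omega> = (onp n \<omega> h \<and> h \<in> expanded (tr \<omega> n) \<and> i < nch (tr \<omega> n) h a)"
definition S1 :: "bnode \<Rightarrow> nat \<Rightarrow> nat \<Rightarrow> nat \<Rightarrow> rsrc \<Rightarrow> bool" where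
  "S1 h a i n \<omega> = onp n \<omega> (h @ [(a, i)])"

lemma lt_nch_meas[measurable]: "Measurable.pred Omega (\<lambda>\<omega>. i < nch (tr \<omega> n) h a)"
  by (rule pred_countable[OF nch_meas]) simp

lemma T1_meas[measurable]: "Measurable.pred Omega (T1 h a i n)"
  unfolding T1_def by measurable
lemma S1_meas[measurable]: "Measurable.pred Omega (S1 h a i n)"
  unfolding S1_def by measurable

lemma onp_snoc: "onp n \<omega> (h @ [x]) \<longleftrightarrow> onp n \<omega> h \<and> contT (tr \<omega> n) (gg n \<omega>) (uu n \<omega>) h x"
  by (simp add: onp_def reach_snoc)

lemma cnt_bound:
  assumes "n0 \<le> N"
  shows "nch (tr x N) h a \<le> i + 1 + n0 + card {n\<in>{n0..<N}. T1 h a i n x}"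
  using assms
proof (induction N rule: dec_induct)
  case base then show ?case using nch_le[of x n0 h a] by simp
next
  case (step N)
  have cs: "card {n\<in>{n0..<Suc N}. T1 h a i n x} = card {n\<in>{n0..<N}. T1 h a i n x} + (if T1 h a i N x then 1 else 0)"
  proof -
    have "{n\<in>{n0..<Suc N}. T1 h a i n x} = (if T1 h a i N x then insert N {n\<in>{n0..<N}. T1 h a i n x} else {n\<in>{n0..<N}. T1 h a i n x})"
      using step.hyps by (auto simp: less_Suc_eq)
    then show ?thesis by simp
  qed
  have ns: "nch (tr x (Suc N)) h a = nch (tr x N) h a + (if onp N x h \<and> crtT (tr x N) (gg N x) (uu N x) h a then 1 else 0)"
    by (simp add: tr_Suc step_nch onp_def)
  show ?case
  proof (cases "onp N x h \<and> crtT (tr x N) (gg N x) (uu N x) h a")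
    case True
    then have ex: "h \<in> expanded (tr x N)" using crtT_imp by blast
    show ?thesis
    proof (cases "i < nch (tr x N) h a")
      case True
      then have "T1 h a i N x" using ex \<open>onp N x h \<and> _\<close> by (simp add: T1_def)
      then show ?thesis using step.IH ns cs by simp
    next
      case False
      then show ?thesis using ns by simp
    qed
  next
    case False
    then have "nch (tr x (Suc N)) h a = nch (tr x N) h a" using ns by simp
    moreover have "card {n\<in>{n0..<N}. T1 h a i n x} \<le> card {n\<in>{n0..<Suc N}. T1 h a i n x}" using cs by simp
    ultimately show ?thesis using step.IH by linarith
  qed
qed

lemma box4:
  assumes am: "a < m" and ic: "i < c"
  shows "measure Omega {y. y (N, k, 0) < ea \<and> real a / real m \<le> y (N, k, 1) \<and> y (N, k, 1) < (real a + 1) / real m \<and>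
      (real c + 1) powr ez \<le> y (N, k, 2) \<and> real i / real c \<le> y (N, k, 3) \<and> y (N, k, 3) < (real i + 1) / real c}
    = ea / real m * (1 - (real c + 1) powr ez) / real c"
proof -
  let ?J = "{(N, k, 0::nat), (N, k, 1::nat), (N, k, 2::nat), (N, k, 3::nat)}"
  let ?A = "\<lambda>z. if snd (snd z) = 0 then {..<ea} else if snd (snd z) = 1 then {real a / real m..<(real a + 1) / real m}
     else if snd (snd z) = 2 then {(real c + 1) powr ez..} else {real i / real c..<(real i + 1) / real c}"
  have e: "{y. y (N, k, 0) < ea \<and> real a / real m \<le> y (N, k, 1) \<and> y (N, k, 1) < (real a + 1) / real m \<and>
      (real c + 1) powr ez \<le> y (N, k, 2) \<and> real i / real c \<le> y (N, k, 3) \<and> y (N, k, 3) < (real i + 1) / real c}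
     = {y. \<forall>z\<in>?J. y z \<in> ?A z}"
    by auto
  have "measure Omega {y. \<forall>z\<in>?J. y z \<in> ?A z} = (\<Prod>z\<in>?J. measure U (?A z))"
    by (rule box_measure) auto
  also have "\<dots> = measure U {..<ea} * (measure U {real a / real m..<(real a + 1) / real m} *
      (measure U {(real c + 1) powr ez..} * measure U {real i / real c..<(real i + 1) / real c}))" by simp
  also have "\<dots> = ea * (1 / real m * ((1 - (real c + 1) powr ez) * (1 / real c)))"
  proof -
    have "measure U {..<ea} = ea" using eapos ealt by (intro mU_lt) auto
    moreover have "measure U {real a / real m..<(real a + 1) / real m} = 1 / real m"
    proof -
      have "measure U {real a / real m..<(real a + 1) / real m} = (real a + 1) / real m - real a / real m"
      proof (rule mU_Ico)
        show "0 \<le> real a / real m" by simp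
        show "real a / real m \<le> (real a + 1) / real m" using mpos by (simp add: divide_right_mono)
        have "real a + 1 \<le> real m" using am by simp
        then show "(real a + 1) / real m \<le> 1" using mpos by simp
      qed
      then show ?thesis using mpos by (simp add: field_simps)
    qed
    moreover have "measure U {(real c + 1) powr ez..} = 1 - (real c + 1) powr ez"
    proof (rule mU_ge)
      show "0 \<le> (real c + 1) powr ez" by simp
      have "(real c + 1) powr ez \<le> 1 powr ez" using ezneg by (intro powr_mono2') auto
      then show "(real c + 1) powr ez \<le> 1" by simp
    qed
    moreover have "measure U {real i / real c..<(real i + 1) / real c} = 1 / real c"
    proof -
      have "measure U {real i / real c..<(real i + 1) / real c} = (real i + 1) / real c - real i / real c"
      proof (rule mU_Ico)
        show "0 \<le> real i / real c" by simp
        show "real i / real c \<le> (real i + 1) / real c" using ic by (simp add: divide_right_mono)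
        have "real i + 1 \<le> real c" using ic by simp
        then show "(real i + 1) / real c \<le> 1" using ic by simp
      qed
      then show ?thesis using ic by (simp add: field_simps)
    qed
    ultimately show ?thesis by simp
  qed
  also have "\<dots> = ea / real m * (1 - (real c + 1) powr ez) / real c" by simp
  finally show ?thesis unfolding e .
qed


lemma two_powr: "0 < 1 - 2 powr ez" "1 - 2 powr ez \<le> 1"
proof -
  have "2 powr ez < 1" using ezneg by (intro powr_less_one) auto
  then show "0 < 1 - 2 powr ez" by simp
  show "1 - 2 powr ez \<le> 1" by simp
qed

lemma CH_inst:
  assumes am: "a < m"
  shows "AE \<omega> in Omega. infinite {n. T1 h a i n \<omega>} \<longrightarrow> infinite {n. S1 h a i n \<omega>}"
proof (rule GL[where k = "length h" and q = "\<lambda>n0 r. ea / real m * (1 - 2 powr ez) / real (i + 1 + n0 + r)"])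
  let ?C = "ea / real m * (1 - 2 powr ez)"
  have C0: "0 < ?C" using eapos mpos two_powr by simp
  have C1: "?C < 1"
  proof -
    have "?C \<le> ea / real m * 1" using two_powr eapos mpos by (intro mult_left_mono) auto
    also have "\<dots> \<le> ea" using mpos eapos by (simp add: divide_le_eq)
    finally show ?thesis using ealt by simp
  qed
  show "{\<omega>. T1 h a i n \<omega>} \<in> sets Omega" for n by (rule pred_sets) measurable
  show "{\<omega>. S1 h a i n \<omega>} \<in> sets Omega" for n by (rule pred_sets) measurable
  show "T1 h a i n (mrg (length h) N x y) = T1 h a i n x" if "n \<le> N" for n N x y
  proof -
    have "n < N \<or> (n = N \<and> length h \<le> length h)" using that by auto
    from onp_mrg[OF this, of x y] show ?thesis using that by (simp add: T1_def tr_mrg)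
  qed
  show "S1 h a i n (mrg (length h) N x y) = S1 h a i n x" if "n < N" for n N x y
    using that by (simp add: S1_def onp_mrg)
  show "0 \<le> ?C / real (i + 1 + n0 + r)" for n0 r using C0 by (intro divide_nonneg_nonneg) auto
  show "?C / real (i + 1 + n0 + r) < 1" for n0 r
  proof -
    have "?C / real (i + 1 + n0 + r) \<le> ?C / 1" using C0 by (intro divide_left_mono) auto
    then show ?thesis using C1 by simp
  qed
  show "\<not> summable (\<lambda>r. ?C / real (i + 1 + n0 + r))" for n0
  proof
    assume "summable (\<lambda>r. ?C / real (i + 1 + n0 + r))"
    then have "summable (\<lambda>r. (\<lambda>n. ?C * inverse (real n)) (r + (i + 1 + n0)))"
      by (simp add: field_simps add.commute)
    then have "summable (\<lambda>n. ?C * inverse (real n))" by (subst (asm) summable_iff_shift)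
    then have "summable (\<lambda>n. inverse (real n) :: real)" using C0 mpos eapos ezneg by simp
    then show False using not_summable_harmonic by blast
  qed
  fix n0 N :: nat and x
  assume N: "n0 \<le> N" and T: "T1 h a i N x"
  let ?k = "length h"
  define c where "c = nch (tr x N) h a"
  define r where "r = card {n\<in>{n0..<N}. T1 h a i n x}"
  have ic: "i < c" using T by (simp add: T1_def c_def)
  have cb: "c \<le> i + 1 + n0 + r" using cnt_bound[OF N] by (simp add: c_def r_def)
  let ?Bx = "{y :: rsrc. y (N, ?k, 0) < ea \<and> real a / real m \<le> y (N, ?k, 1) \<and> y (N, ?k, 1) < (real a + 1) / real m \<and>
      (real c + 1) powr ez \<le> y (N, ?k, 2) \<and> real i / real c \<le> y (N, ?k, 3) \<and> y (N, ?k, 3) < (real i + 1) / real c}"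
  have "measure Omega {y. \<not> S1 h a i N (mrg ?k N x y)} \<le> 1 - measure Omega ?Bx"
  proof (rule compl_bound)
    show "Measurable.pred Omega (\<lambda>y. S1 h a i N (mrg ?k N x y))" by (rule pred_mrg) measurable
    show "?Bx \<in> sets Omega" by (rule pred_sets) measurable
    fix y assume y: "y \<in> ?Bx"
    let ?w = "mrg ?k N x y"
    have o: "onp N ?w h" using T onp_mrg[of N N h ?k x y] by (simp add: T1_def)
    have t: "tr ?w N = tr x N" by (simp add: tr_mrg)
    have ac: "act N ?w h = a" using y am by (intro act_box) auto
    have co: "\<And>j. ?w (N, ?k, j) = y (N, ?k, j)" by (simp add: mrg_def)
    have idx: "min (c - 1) (nat \<lfloor>y (N, ?k, 3) * real c\<rfloor>) = i"
    proof -
      have "nat \<lfloor>y (N, ?k, 3) * real c\<rfloor> = i" using y ic by (intro floor_idx) auto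
      then show ?thesis using ic by simp
    qed
    have "contT (tr ?w N) (gg N ?w) (uu N ?w) h (a, i)"
      unfolding contT_def t using T exp_gamma[of h x N] ac ic y idx
      by (auto simp: T1_def act_def uu_def co idxT_def c_def[symmetric])
    then show "S1 h a i N ?w" using o by (simp add: S1_def onp_snoc)
  qed
  also have "\<dots> = 1 - ea / real m * (1 - (real c + 1) powr ez) / real c"
    using box4[OF am ic] by simp
  also have "\<dots> \<le> 1 - ?C / real (i + 1 + n0 + r)"
  proof -
    have "(real c + 1) powr ez \<le> 2 powr ez" using ezneg ic by (intro powr_mono2') auto
    then have "?C \<le> ea / real m * (1 - (real c + 1) powr ez)" using eapos mpos by (intro mult_left_mono) auto
    moreover have "0 < real c" using ic by simp
    moreover have "real c \<le> real (i + 1 + n0 + r)" using cb by simp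
    ultimately have "?C / real (i + 1 + n0 + r) \<le> ea / real m * (1 - (real c + 1) powr ez) / real c"
      using C0 by (intro frac_le) auto
    then show ?thesis by simp
  qed
  finally show "measure Omega {y. \<not> S1 h a i N (mrg ?k N x y)} \<le> 1 - ?C / real (i + 1 + n0 + card {n\<in>{n0..<N}. T1 h a i n x})"
    by (simp add: r_def)
qed

end


declare descend.simps[simp del]

lemma inf_mono_from:
  assumes "infinite {n::nat. P n}" "\<And>n. st \<le> n \<Longrightarrow> P n \<Longrightarrow> Q n"
  shows "infinite {n. Q n}"
proof
  assume "finite {n. Q n}"
  moreover have "{n. P n} \<subseteq> {n. Q n} \<union> {..<st}" using assms(2) by (auto simp: not_le[symmetric])
  ultimately show False using assms(1) finite_subset by blast
qed

context pomcp
begin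

lemma act_lt: "act n \<omega> h < m"
  using mpos Glt[of n h \<omega>] by (auto simp: act_def actT_def gg_def)

lemma nch_pos_lt: "0 < nch (tr \<omega> n) h a \<Longrightarrow> a < m"
proof (induction n)
  case 0 then show ?case by (simp add: tr_0 init_tree_def)
next
  case (Suc n)
  show ?case
  proof (cases "onp n \<omega> h \<and> crtT (tr \<omega> n) (gg n \<omega>) (uu n \<omega>) h a")
    case True
    then have "act n \<omega> h = a" using crtT_imp by (auto simp: act_def)
    then show ?thesis using act_lt[of n \<omega> h] by simp
  next
    case False
    then show ?thesis using Suc by (auto simp: tr_Suc step_nch onp_def split: if_splits)
  qed
qed

lemma B_io: "AE \<omega> in Omega. (\<exists>n. h \<in> created (tr \<omega> n)) \<longrightarrow> infinite {n. onp n \<omega> h}"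
proof (induction h rule: rev_induct)
  case Nil
  have "onp n \<omega> [] " for n \<omega> by (simp add: onp_def reach_Nil)
  then show ?case by simp
next
  case (snoc x h)
  obtain a i where x: "x = (a, i)" by (cases x)
  have cr: "h @ [(a, i)] \<in> created (tr \<omega> n) \<longleftrightarrow> h \<in> expanded (tr \<omega> n) \<and> i < nch (tr \<omega> n) h a" for \<omega> n
    using inv_tr[of \<omega> n] by (auto simp: inv_def)
  show ?case
  proof (cases "a < m")
    case False
    have "\<not> h @ [(a, i)] \<in> created (tr \<omega> n)" for \<omega> n using False nch_pos_lt[of \<omega> n h a] by (auto simp: cr)
    then show ?thesis by (simp add: x)
  next
    case True
    show ?thesis using snoc CH_inst[OF True, of h i]
    proof eventually_elim
      case (elim \<omega>)
      show ?case unfolding x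
      proof
        assume "\<exists>n. h @ [(a, i)] \<in> created (tr \<omega> n)"
        then obtain n0 where n0: "h \<in> expanded (tr \<omega> n0)" "i < nch (tr \<omega> n0) h a" by (auto simp: cr)
        then have "h \<in> created (tr \<omega> n0)" using inv_tr[of \<omega> n0] by (auto simp: inv_def)
        then have "infinite {n. onp n \<omega> h}" using elim(1) by blast
        then have "infinite {n. T1 h a i n \<omega>}"
        proof (rule inf_mono_from[where st = n0])
          fix n assume "n0 \<le> n" "onp n \<omega> h"
          then show "T1 h a i n \<omega>" using n0 tr_mono(1)[of n0 n \<omega>] tr_mono(3)[of n0 n \<omega> h a] by (auto simp: T1_def)
        qed
        then have "infinite {n. S1 h a i n \<omega>}" using elim(2) by blast
        then show "infinite {n. onp n \<omega> (h @ [(a, i)])}" by (simp add: S1_def)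
      qed
    qed
  qed
qed

lemma BA_io:
  assumes am: "a < m"
  shows "AE \<omega> in Omega. (\<exists>n. h \<in> expanded (tr \<omega> n)) \<longrightarrow> infinite {n. BA h a \<in> pomcp_visited m ea ez \<gamma> \<epsilon> G \<omega> n}"
  using B_io[of h] BA_inst[OF am, of h]
proof eventually_elim
  case (elim \<omega>)
  show ?case
  proof
    assume "\<exists>n. h \<in> expanded (tr \<omega> n)"
    then obtain n0 where n0: "h \<in> expanded (tr \<omega> n0)" by blast
    then have "h \<in> created (tr \<omega> n0)" using inv_tr[of \<omega> n0] by (auto simp: inv_def)
    then have "infinite {n. onp n \<omega> h}" using elim(1) by blast
    then have "infinite {n. T2 h n \<omega>}"
    proof (rule inf_mono_from[where st = n0])
      fix n assume "n0 \<le> n" "onp n \<omega> h"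
      then show "T2 h n \<omega>" using n0 tr_mono[of n0 n \<omega>] by (auto simp: T2_def)
    qed
    then have "infinite {n. S2 h a n \<omega>}" using elim(2) by blast
    then show "infinite {n. BA h a \<in> pomcp_visited m ea ez \<gamma> \<epsilon> G \<omega> n}" by (simp add: S2_def visBA')
  qed
qed

lemma main:
  "AE \<omega> in Omega. \<forall>x. (\<exists>n. x \<in> tree_nodes m (pomcp_tree m ea ez \<gamma> \<epsilon> G \<omega> n))
            \<longrightarrow> infinite {n. x \<in> pomcp_visited m ea ez \<gamma> \<epsilon> G \<omega> n}"
proof -
  have A1: "AE \<omega> in Omega. \<forall>h. (\<exists>n. h \<in> created (tr \<omega> n)) \<longrightarrow> infinite {n. onp n \<omega> h}"
    by (subst AE_all_countable) (auto intro: B_io)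
  have A2: "AE \<omega> in Omega. \<forall>h a. a < m \<longrightarrow> (\<exists>n. h \<in> expanded (tr \<omega> n)) \<longrightarrow> infinite {n. BA h a \<in> pomcp_visited m ea ez \<gamma> \<epsilon> G \<omega> n}"
    by (subst AE_all_countable, rule allI, subst AE_all_countable) (auto intro: BA_io)
  show ?thesis using A1 A2
  proof eventually_elim
    case (elim \<omega>)
    show ?case
    proof (intro allI impI)
      fix x assume "\<exists>n. x \<in> tree_nodes m (pomcp_tree m ea ez \<gamma> \<epsilon> G \<omega> n)"
      then obtain n where n: "x \<in> tree_nodes m (tr \<omega> n)" by (auto simp: tr_def)
      show "infinite {n. x \<in> pomcp_visited m ea ez \<gamma> \<epsilon> G \<omega> n}"
      proof (cases x)
        case (B h)
        then have "h \<in> created (tr \<omega> n)" using n by (auto simp: tree_nodes_def)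
        then have "infinite {n. onp n \<omega> h}" using elim(1) by blast
        then show ?thesis by (simp add: B visB')
      next
        case (BA h a)
        then have "h \<in> expanded (tr \<omega> n)" "a < m" using n by (auto simp: tree_nodes_def)
        then show ?thesis using elim(2) BA by blast
      qed
    qed
  qed
qed

end


theorem theorem1:
  fixes m :: nat and ea ez \<gamma> \<epsilon> :: real
    and G :: "nat \<Rightarrow> bnode \<Rightarrow> rsrc \<Rightarrow> nat"
  assumes "0 < m"
    and "0 < ea" and "ea < 1" and "ez < 0"
    and "0 < \<gamma>" and "\<gamma> < 1" and "0 < \<epsilon>"
    and "\<And>n h \<omega>. G n h \<omega> < m"
    and "\<And>n h \<omega> \<omega>'. (\<And>n' k j. n' < n \<Longrightarrow> \<omega> (n', k, j) = \<omega>' (n', k, j)) \<Longrightarrow> G n h \<omega> = G n h \<omega>'"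
    and "\<And>n h. (\<lambda>\<omega>. G n h \<omega>) \<in> measurable Omega (count_space UNIV)"
  shows "AE \<omega> in Omega. \<forall>x. (\<exists>n. x \<in> tree_nodes m (pomcp_tree m ea ez \<gamma> \<epsilon> G \<omega> n))
            \<longrightarrow> infinite {n. x \<in> pomcp_visited m ea ez \<gamma> \<epsilon> G \<omega> n}"
proof -
  interpret P: pomcp m ea ez \<gamma> \<epsilon> G
    by unfold_locales (fact assms)+
  show ?thesis by (rule P.main)
qed

end
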